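(* Let $n=2^m$ with $m\ge 4$ and let $\mathcal{Q}$ be the Steiner quadruple system of the extended Hamming code of length $n$. Then the set $C=\{x\subset\{1,\dots,n\}: |x|=6,\ \text{no block of }\mathcal{Q}\text{ is a subset of }x\}$ is a completely regular code in the Johnson graph $J(n,6)$ with covering radius $2$. Its distance partition is $(C^0,C^1,C^2)$, where $C^j$ is the set of $6$-subsets containing exactly $0$, $1$, $3$ blocks of $\mathcal{Q}$ for $j=0,1,2$ respectively; there are no edges between $C^0$ and $C^2$, and each vertex of $C^1$ is adjacent to exactly $6$ vertices of $C^2$.
   Context: The Johnson graph $J(n,k)$ has as vertices the $k$-element subsets of $\{1,\dots,n\}$, two being adjacent iff they meet in $k-1$ elements. The extended binary Hamming code of length $n=2^m$ is obtained by adding an overall parity bit to the binary Hamming code of length $2^m-1$; its Steiner quadruple system $\mathcal{Q}$ is the set of supports of its weight-$4$ codewords (a $3$-$(n,4,1)$ design). For a nonempty vertex set $C$ of a connected regular graph, $C_i$ is the set of vertices at distance exactly $i$ from $C$, the covering radius is the largest $i$ with $C_i\neq\emptyset$, and $C$ is completely regular if there are numbers $\gamma_i,\alpha_i,\beta_i$ such that every vertex of $C_i$ has exactly $\gamma_i$ neighbours in $C_{i-1}$, $\alpha_i$ in $C_i$, $\beta_i$ in $C_{i+1}$, for all $i$. *)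

theory Defs
  imports Main
begin

definition walk :: "('a \<Rightarrow> 'a \<Rightarrow> bool) \<Rightarrow> 'a \<Rightarrow> 'a \<Rightarrow> nat \<Rightarrow> bool" where
  "walk E x y k \<longleftrightarrow> (\<exists>p :: nat \<Rightarrow> 'a. p 0 = x \<and> p k = y \<and> (\<forall>i<k. E (p i) (p (Suc i))))"

definition dist_to :: "('a \<Rightarrow> 'a \<Rightarrow> bool) \<Rightarrow> 'a set \<Rightarrow> 'a \<Rightarrow> nat" where
  "dist_to E C x = (LEAST k. \<exists>c\<in>C. walk E c x k)"

definition layer :: "'a set \<Rightarrow> ('a \<Rightarrow> 'a \<Rightarrow> bool) \<Rightarrow> 'a set \<Rightarrow> int \<Rightarrow> 'a set" where
  "layer V E C i = {x \<in> V. int (dist_to E C x) = i}"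

definition covering_radius :: "'a set \<Rightarrow> ('a \<Rightarrow> 'a \<Rightarrow> bool) \<Rightarrow> 'a set \<Rightarrow> nat" where
  "covering_radius V E C = Max {i. layer V E C (int i) \<noteq> {}}"

definition completely_regular :: "'a set \<Rightarrow> ('a \<Rightarrow> 'a \<Rightarrow> bool) \<Rightarrow> 'a set \<Rightarrow> bool" where
  "completely_regular V E C \<longleftrightarrow> C \<noteq> {} \<and> C \<subseteq> V \<and>
     (\<exists>\<gamma> \<alpha> \<beta> :: int \<Rightarrow> nat. \<forall>i. \<forall>x \<in> layer V E C i.
        card {y \<in> V. E x y \<and> y \<in> layer V E C (i - 1)} = \<gamma> i \<and>
        card {y \<in> V. E x y \<and> y \<in> layer V E C i} = \<alpha> i \<and>
        card {y \<in> V. E x y \<and> y \<in> layer V E C (i + 1)} = \<beta> i)"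

definition johnson_vertices :: "nat \<Rightarrow> nat \<Rightarrow> nat set set" where
  "johnson_vertices n k = {x. x \<subseteq> {1..n} \<and> card x = k}"

definition johnson_adj :: "nat \<Rightarrow> nat \<Rightarrow> nat set \<Rightarrow> nat set \<Rightarrow> bool" where
  "johnson_adj n k x y \<longleftrightarrow> x \<in> johnson_vertices n k \<and> y \<in> johnson_vertices n k \<and>
      card (x \<inter> y) = k - 1"

text \<open>Binary Hamming code of length 2^m - 1, codewords represented by their supports
  (subsets of {1..2^m-1}); the parity-check matrix has as column i the binary
  representation of i, i.e. bit j of row-syndrome is the parity of #{i in S. bit i j}.\<close>
definition hamming_code :: "nat \<Rightarrow> nat set set" where
  "hamming_code m = {S. S \<subseteq> {1..2^m - 1} \<and> (\<forall>j<m. even (card {i \<in> S. bit i j}))}"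

text \<open>Extended Hamming code of length n = 2^m: overall parity bit at coordinate 2^m.\<close>
definition ext_hamming_code :: "nat \<Rightarrow> nat set set" where
  "ext_hamming_code m =
     (\<lambda>S. if odd (card S) then insert (2^m) S else S) ` hamming_code m"

definition hamming_SQS :: "nat \<Rightarrow> nat set set" where
  "hamming_SQS m = {B \<in> ext_hamming_code m. card B = 4}"

end

theory Submission imports Defs begin

datatype lb = Lb nat

fun lx :: "lb \<Rightarrow> lb \<Rightarrow> lb" (infixl "\<oplus>" 65) where "Lb a \<oplus> Lb b = Lb (xor a b)"

definition Z :: "lb \<Rightarrow> bool" where "Z a \<longleftrightarrow> a = Lb 0"

lemma lx_assoc: "(a \<oplus> b) \<oplus> c = a \<oplus> (b \<oplus> c)"
  by (cases a; cases b; cases c) (simp add: xor.assoc)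
lemma lx_comm: "a \<oplus> b = b \<oplus> a"
  by (cases a; cases b) (simp add: xor.commute)
lemma lx_lcomm: "a \<oplus> (b \<oplus> c) = b \<oplus> (a \<oplus> c)"
  by (cases a; cases b; cases c) (simp add: xor.left_commute)
lemma lx_self: "a \<oplus> a = Lb 0"
  by (cases a) simp
lemma lx_self2: "a \<oplus> (a \<oplus> b) = b"
  by (cases a; cases b) (simp flip: xor.assoc)
lemma lx_0: "a \<oplus> Lb 0 = a" "Lb 0 \<oplus> a = a"
  by (cases a; simp)+
lemma eqZ: "(a = b) \<longleftrightarrow> Z (a \<oplus> b)"
  by (cases a; cases b) (auto simp: Z_def bit_eq_iff bit_xor_iff)
lemma Z0: "Z (Lb 0)" by (simp add: Z_def)

lemmas lxs = lx_assoc lx_comm lx_lcomm lx_self lx_self2 lx_0 Z0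


lemma card_filter_sum: "finite A \<Longrightarrow> card {i\<in>A. p i} = (\<Sum>i\<in>A. if p i then 1 else 0)"
  by (simp add: sum.If_cases Int_def)

lemma par4: "even (card {i\<in>{a,b,c,d}. p i}) \<longleftrightarrow> (p a = (p b = (p c = p d)))"
  if "distinct [a,b,c,d]" for a b c d :: nat
proof -
  have "card {i\<in>{a,b,c,d}. p i} = (\<Sum>i\<in>{a,b,c,d}. if p i then 1 else 0)"
    by (rule card_filter_sum) simp
  also have "\<dots> = of_bool (p a) + of_bool (p b) + of_bool (p c) + of_bool (p d)"
    using that by simp
  finally have e: "card {i\<in>{a,b,c,d}. p i} = of_bool (p a) + of_bool (p b) + of_bool (p c) + of_bool (p d)" .
  show ?thesis unfolding e by (cases "p a"; cases "p b"; cases "p c"; cases "p d"; simp)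
qed

definition cntk :: "'a set \<Rightarrow> nat \<Rightarrow> ('a set \<Rightarrow> bool) \<Rightarrow> nat" where
  "cntk A k \<Phi> = card {B. B \<subseteq> A \<and> card B = k \<and> \<Phi> B}"

lemma cntk_empty: "cntk {} k \<Phi> = (if k = 0 \<and> \<Phi> {} then 1 else 0)"
proof -
  have "{B. B \<subseteq> {} \<and> card B = k \<and> \<Phi> B} = (if k = 0 \<and> \<Phi> {} then {{}} else {})" by auto
  thus ?thesis unfolding cntk_def by simp
qed

lemma cntk_zero: "finite A \<Longrightarrow> cntk A 0 \<Phi> = (if \<Phi> {} then 1 else 0)"
proof -
  assume fA: "finite A"
  have "{B. B \<subseteq> A \<and> card B = 0 \<and> \<Phi> B} = (if \<Phi> {} then {{}} else {})"
    using fA by (auto dest: rev_finite_subset simp: card_eq_0_iff)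
  thus ?thesis unfolding cntk_def by simp
qed

lemma cntk_insert:
  assumes fA: "finite A" and aA: "a \<notin> A" and k: "0 < k"
  shows "cntk (insert a A) k \<Phi> = cntk A k \<Phi> + cntk A (k-1) (\<lambda>B. \<Phi> (insert a B))"
proof -
  let ?S1 = "{B. B \<subseteq> A \<and> card B = k \<and> \<Phi> B}"
  let ?T = "{B. B \<subseteq> A \<and> card B = k - 1 \<and> \<Phi> (insert a B)}"
  have eq: "{B. B \<subseteq> insert a A \<and> card B = k \<and> \<Phi> B} = ?S1 \<union> insert a ` ?T"
  proof (rule set_eqI, rule iffI)
    fix B assume B: "B \<in> {B. B \<subseteq> insert a A \<and> card B = k \<and> \<Phi> B}"
    show "B \<in> ?S1 \<union> insert a ` ?T"
    proof (cases "a \<in> B")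
      case True
      have fB: "finite B" using B fA by (auto intro: finite_subset)
      have "B - {a} \<in> ?T" using B True fB aA by (auto simp: insert_absorb)
      moreover have "B = insert a (B - {a})" using True by auto
      ultimately show ?thesis by blast
    next
      case False thus ?thesis using B by auto
    qed
  next
    fix B assume "B \<in> ?S1 \<union> insert a ` ?T"
    thus "B \<in> {B. B \<subseteq> insert a A \<and> card B = k \<and> \<Phi> B}"
    proof
      assume "B \<in> ?S1" thus ?thesis by auto
    next
      assume "B \<in> insert a ` ?T"
      then obtain C where C: "C \<in> ?T" "B = insert a C" by blast
      have fC: "finite C" using C fA by (auto intro: finite_subset)
      have "a \<notin> C" using C aA by auto
      hence "card B = k" using C fC k by simp
      thus ?thesis using C by auto
    qed
  qed
  have f1: "finite ?S1" using fA by (auto intro: finite_subset[of _ "Pow A"])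
  have f2: "finite ?T" using fA by (auto intro: finite_subset[of _ "Pow A"])
  have disj: "?S1 \<inter> insert a ` ?T = {}" using aA by auto
  have inj: "inj_on (insert a) ?T"
    unfolding inj_on_def using aA by (metis (no_types, lifting) Diff_insert_absorb mem_Collect_eq subsetD)
  show ?thesis unfolding cntk_def eq
    using card_Un_disjoint[OF f1 finite_imageI[OF f2] disj] card_image[OF inj] by simp
qed

lemma card6: "card (x::'a set) = 6 \<Longrightarrow> \<exists>a b c d e f. distinct [a,b,c,d,e,f] \<and> x = {a,b,c,d,e,f}"
proof -
  assume "card x = 6"
  hence c0: "card x = Suc 5" by simp
  obtain a x1 where 1: "x = insert a x1" "a \<notin> x1" "card x1 = Suc 4" using card_eq_SucD[OF c0] by auto
  obtain b x2 where 2: "x1 = insert b x2" "b \<notin> x2" "card x2 = Suc 3" using card_eq_SucD[OF 1(3)] by auto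
  obtain c x3 where 3: "x2 = insert c x3" "c \<notin> x3" "card x3 = Suc 2" using card_eq_SucD[OF 2(3)] by auto
  obtain d x4 where 4: "x3 = insert d x4" "d \<notin> x4" "card x4 = Suc 1" using card_eq_SucD[OF 3(3)] by auto
  obtain e x5 where 5: "x4 = insert e x5" "e \<notin> x5" "card x5 = Suc 0" using card_eq_SucD[OF 4(3)] by auto
  obtain f where 6: "x5 = {f}" using card_1_singletonE 5(3) by auto
  have "distinct [a,b,c,d,e,f]" using 1 2 3 4 5 6 by simp
  moreover have "x = {a,b,c,d,e,f}" using 1 2 3 4 5 6 by simp
  ultimately show ?thesis by blast
qed

lemma card4: "card (x::'a set) = 4 \<Longrightarrow> \<exists>c d e f. distinct [c,d,e,f] \<and> x = {c,d,e,f}"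
proof -
  assume "card x = 4"
  hence c0: "card x = Suc 3" by simp
  obtain c x3 where 3: "x = insert c x3" "c \<notin> x3" "card x3 = Suc 2" using card_eq_SucD[OF c0] by auto
  obtain d x4 where 4: "x3 = insert d x4" "d \<notin> x4" "card x4 = Suc 1" using card_eq_SucD[OF 3(3)] by auto
  obtain e x5 where 5: "x4 = insert e x5" "e \<notin> x5" "card x5 = Suc 0" using card_eq_SucD[OF 4(3)] by auto
  obtain f where 6: "x5 = {f}" using card_1_singletonE 5(3) by auto
  have "distinct [c,d,e,f]" using 3 4 5 6 by simp
  moreover have "x = {c,d,e,f}" using 3 4 5 6 by simp
  ultimately show ?thesis by blast
qed

lemma card2: "card (x::'a set) = 2 \<Longrightarrow> \<exists>a b. a \<noteq> b \<and> x = {a,b}"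
proof -
  assume "card x = 2"
  hence c0: "card x = Suc 1" by simp
  obtain e x5 where 5: "x = insert e x5" "e \<notin> x5" "card x5 = Suc 0" using card_eq_SucD[OF c0] by auto
  obtain f where 6: "x5 = {f}" using card_1_singletonE 5(3) by auto
  show ?thesis using 5 6 by blast
qed

locale H = fixes m :: nat assumes m4: "4 \<le> m"
begin

definition L :: "nat \<Rightarrow> lb" where "L i = Lb (i mod 2^m)"
definition P :: "nat set" where "P = {1..2^m}"
definition Q :: "nat set set" where "Q = hamming_SQS m"
definition cnt :: "nat set \<Rightarrow> nat" where "cnt y = card {B\<in>Q. B \<subseteq> y}"
definition iota :: "lb \<Rightarrow> nat" where "iota g = (case g of Lb k \<Rightarrow> if k = 0 then 2^m else k)"

lemma ext_iff:
  assumes "B \<subseteq> P" "even (card B)"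
  shows "B \<in> ext_hamming_code m \<longleftrightarrow> B - {2^m} \<in> hamming_code m"
proof
  assume "B \<in> ext_hamming_code m"
  then obtain S where S: "S \<in> hamming_code m" "B = (if odd (card S) then insert (2^m) S else S)"
    unfolding ext_hamming_code_def by auto
  have "2^m \<notin> S"
  proof
    assume "2^m \<in> S"
    hence "(2::nat)^m \<in> {1..2^m - 1}" using S(1) unfolding hamming_code_def by blast
    hence "(2::nat)^m \<le> 2^m - 1" by (simp only: atLeastAtMost_iff)
    moreover have "(2::nat)^m - 1 < 2^m" using diff_less[of 1 "(2::nat)^m"] by simp
    ultimately show False by linarith
  qed
  hence "B - {2^m} = S" using S(2) by (auto split: if_splits)
  thus "B - {2^m} \<in> hamming_code m" using S(1) by simp
next
  assume h: "B - {2^m} \<in> hamming_code m"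
  have fin: "finite B" using assms(1) unfolding P_def using finite_subset by blast
  show "B \<in> ext_hamming_code m"
  proof (cases "2^m \<in> B")
    case True
    hence "card B = Suc (card (B - {2^m}))" using card_Suc_Diff1[OF fin True] by simp
    hence "odd (card (B - {2^m}))" using assms(2) by simp
    moreover have "insert (2^m) (B - {2^m}) = B" using True by auto
    ultimately have "B = (\<lambda>S. if odd (card S) then insert (2^m) S else S) (B - {2^m})" by simp
    thus ?thesis unfolding ext_hamming_code_def using h by (rule image_eqI)
  next
    case False
    hence "B - {2^m} = B" by auto
    hence "B = (\<lambda>S. if odd (card S) then insert (2^m) S else S) (B - {2^m})" using assms(2) by simp
    thus ?thesis unfolding ext_hamming_code_def using h by (rule image_eqI)
  qed
qed

lemma bit_mod: "bit (i mod 2^m) j \<longleftrightarrow> j < m \<and> bit (i::nat) j"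
  by (simp flip: take_bit_eq_mod add: bit_take_bit_iff)

lemma block_iff:
  assumes "a \<in> P" "b \<in> P" "c \<in> P" "d \<in> P" "distinct [a,b,c,d]"
  shows "{a,b,c,d} \<in> Q \<longleftrightarrow> Z (L a \<oplus> L b \<oplus> L c \<oplus> L d)"
proof -
  let ?B = "{a,b,c,d}"
  let ?X = "xor (xor (xor (a mod 2^m) (b mod 2^m)) (c mod 2^m)) (d mod 2^m)"
  have c4: "card ?B = 4" using assms(5) by simp
  have sub: "?B \<subseteq> P" using assms by auto
  have s1: "?B - {2^m} \<subseteq> {1..2^m-1}"
  proof
    fix x assume "x \<in> ?B - {2^m}"
    hence "x \<in> {1..2^m}" "x \<noteq> 2^m" using sub unfolding P_def by auto
    thus "x \<in> {1..2^m-1}" unfolding atLeastAtMost_iff by arith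
  qed
  have "?B \<in> Q \<longleftrightarrow> ?B \<in> ext_hamming_code m"
    unfolding Q_def hamming_SQS_def using c4 by simp
  also have "\<dots> \<longleftrightarrow> ?B - {2^m} \<in> hamming_code m" using ext_iff[OF sub] c4 by simp
  also have "\<dots> \<longleftrightarrow> (\<forall>j<m. even (card {i\<in>?B - {2^m}. bit i j}))"
    unfolding hamming_code_def using s1 by simp
  also have "\<dots> \<longleftrightarrow> (\<forall>j<m. even (card {i\<in>?B. bit i j}))"
  proof -
    have "\<And>j. j < m \<Longrightarrow> {i\<in>?B - {2^m}. bit i j} = {i\<in>?B. bit i j}"
      by (auto simp: bit_exp_iff)
    thus ?thesis by simp
  qed
  also have "\<dots> \<longleftrightarrow> (\<forall>j<m. \<not> bit ?X j)"
  proof -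
    have "even (card {i\<in>?B. bit i j}) \<longleftrightarrow> \<not> bit ?X j" if "j < m" for j
      using par4[OF assms(5), of "\<lambda>i. bit i j"] that by (simp add: bit_xor_iff bit_mod) blast
    thus ?thesis by blast
  qed
  also have "\<dots> \<longleftrightarrow> (\<forall>j. \<not> bit ?X j)"
  proof -
    have "\<not> bit ?X j" if "m \<le> j" for j using that by (simp add: bit_xor_iff bit_mod)
    thus ?thesis using not_le by blast
  qed
  also have "\<dots> \<longleftrightarrow> ?X = 0"
    by (simp add: bit_eq_iff)
  also have "\<dots> \<longleftrightarrow> Z (L a \<oplus> L b \<oplus> L c \<oplus> L d)"
    by (simp add: L_def Z_def)
  finally show ?thesis .
qed


lemma Q_card: "B \<in> Q \<Longrightarrow> card B = 4"
  unfolding Q_def hamming_SQS_def by simp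

lemma cnt_formula: "finite y \<Longrightarrow> cnt y = cntk y 4 (\<lambda>B. B \<in> Q)"
  unfolding cnt_def cntk_def by (rule arg_cong[where f=card]) (auto simp: Q_card)


lemma L_inj: "i \<in> P \<Longrightarrow> j \<in> P \<Longrightarrow> L i = L j \<Longrightarrow> i = j"
proof -
  assume i: "i \<in> P" and j: "j \<in> P" and e: "L i = L j"
  have "i mod 2^m = j mod 2^m" using e by (simp add: L_def)
  moreover have "i \<noteq> j \<Longrightarrow> i mod 2^m \<noteq> j mod 2^m"
  proof -
    assume ne: "i \<noteq> j"
    have ij: "1 \<le> i" "i \<le> 2^m" "1 \<le> j" "j \<le> 2^m" using i j by (auto simp: P_def)
    show ?thesis
    proof (cases "i = 2^m")
      case True
      hence "j < 2^m" using ne ij by auto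
      thus ?thesis using True ij by simp
    next
      case False
      hence "i < 2^m" using ij by auto
      show ?thesis
      proof (cases "j = 2^m")
        case True thus ?thesis using \<open>i < 2^m\<close> ij by simp
      next
        case False
        hence "j < 2^m" using ij by auto
        thus ?thesis using \<open>i < 2^m\<close> ne by simp
      qed
    qed
  qed
  ultimately show "i = j" by blast
qed

lemma Ldist: "i \<in> P \<Longrightarrow> j \<in> P \<Longrightarrow> i \<noteq> j \<Longrightarrow> \<not> Z (L i \<oplus> L j)"
  using L_inj eqZ by blast

lemma C0u:
  assumes P: "a \<in> P" "b \<in> P" "c \<in> P" "d \<in> P" "e \<in> P" "f \<in> P" and D: "distinct [a,b,c,d,e,f]"
    and N: "\<not> Z (L a \<oplus> L b \<oplus> L c \<oplus> L d)" "\<not> Z (L a \<oplus> L b \<oplus> L c \<oplus> L e)" "\<not> Z (L a \<oplus> L b \<oplus> L c \<oplus> L f)" "\<not> Z (L a \<oplus> L b \<oplus> L d \<oplus> L e)" "\<not> Z (L a \<oplus> L b \<oplus> L d \<oplus> L f)" "\<not> Z (L a \<oplus> L b \<oplus> L e \<oplus> L f)" "\<not> Z (L a \<oplus> L c \<oplus> L d \<oplus> L e)" "\<not> Z (L a \<oplus> L c \<oplus> L d \<oplus> L f)" "\<not> Z (L a \<oplus> L c \<oplus> L e \<oplus> L f)" "\<not> Z (L a \<oplus> L d \<oplus> L e \<oplus> L f)" "\<not> Z (L b \<oplus> L c \<oplus> L d \<oplus> L e)" "\<not> Z (L b \<oplus> L c \<oplus> L d \<oplus> L f)" "\<not> Z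 (L b \<oplus> L c \<oplus> L e \<oplus> L f)" "\<not> Z (L b \<oplus> L d \<oplus> L e \<oplus> L f)" "\<not> Z (L c \<oplus> L d \<oplus> L e \<oplus> L f)"
    and v: "v \<in> P" "v \<notin> {a,b,c,d,e,f}"
  shows "cnt (insert v {b,c,d,e,f}) = (if L v \<in> {L b \<oplus> L c \<oplus> L d, L b \<oplus> L c \<oplus> L e, L b \<oplus> L c \<oplus> L f, L b \<oplus> L d \<oplus> L e, L b \<oplus> L d \<oplus> L f, L b \<oplus> L e \<oplus> L f, L c \<oplus> L d \<oplus> L e, L c \<oplus> L d \<oplus> L f, L c \<oplus> L e \<oplus> L f, L d \<oplus> L e \<oplus> L f} then 1 else 0)"
proof -
  have D2: "distinct [v,b,c,d,e,f]" using D v by auto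
  have LD: "\<not> Z (L v \<oplus> L a)" "\<not> Z (L v \<oplus> L b)" "\<not> Z (L v \<oplus> L c)" "\<not> Z (L v \<oplus> L d)" "\<not> Z (L v \<oplus> L e)" "\<not> Z (L v \<oplus> L f)" "\<not> Z (L a \<oplus> L b)" "\<not> Z (L a \<oplus> L c)" "\<not> Z (L a \<oplus> L d)" "\<not> Z (L a \<oplus> L e)" "\<not> Z (L a \<oplus> L f)" "\<not> Z (L b \<oplus> L c)" "\<not> Z (L b \<oplus> L d)" "\<not> Z (L b \<oplus> L e)" "\<not> Z (L b \<oplus> L f)" "\<not> Z (L c \<oplus> L d)" "\<not> Z (L c \<oplus> L e)" "\<not> Z (L c \<oplus> L f)" "\<not> Z (L d \<oplus> L e)" "\<not> Z (L d \<oplus> L f)" "\<not> Z (L e \<oplus> L f)"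
    using P D v by (simp_all add: Ldist)
  show ?thesis
  proof (cases "L v \<in> {L b \<oplus> L c \<oplus> L d, L b \<oplus> L c \<oplus> L e, L b \<oplus> L c \<oplus> L f, L b \<oplus> L d \<oplus> L e, L b \<oplus> L d \<oplus> L f, L b \<oplus> L e \<oplus> L f, L c \<oplus> L d \<oplus> L e, L c \<oplus> L d \<oplus> L f, L c \<oplus> L e \<oplus> L f, L d \<oplus> L e \<oplus> L f}")
    case True
    hence "L v = L b \<oplus> L c \<oplus> L d \<or> L v = L b \<oplus> L c \<oplus> L e \<or> L v = L b \<oplus> L c \<oplus> L f \<or> L v = L b \<oplus> L d \<oplus> L e \<or> L v = L b \<oplus> L d \<oplus> L f \<or> L v = L b \<oplus> L e \<oplus> L f \<or> L v = L c \<oplus> L d \<oplus> L e \<or> L v = L c \<oplus> L d \<oplus> L f \<or> L v = L c \<oplus> L e \<oplus> L f \<or> L v = L d \<oplus> L e \<oplus> L f" by simp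
    thus ?thesis using P D2 N LD v(1) by (elim disjE) (simp_all add: cnt_formula cntk_insert cntk_zero cntk_empty block_iff lxs)
  next
    case False
    hence M: "\<not> Z (L v \<oplus> L b \<oplus> L c \<oplus> L d)" "\<not> Z (L v \<oplus> L b \<oplus> L c \<oplus> L e)" "\<not> Z (L v \<oplus> L b \<oplus> L c \<oplus> L f)" "\<not> Z (L v \<oplus> L b \<oplus> L d \<oplus> L e)" "\<not> Z (L v \<oplus> L b \<oplus> L d \<oplus> L f)" "\<not> Z (L v \<oplus> L b \<oplus> L e \<oplus> L f)" "\<not> Z (L v \<oplus> L c \<oplus> L d \<oplus> L e)" "\<not> Z (L v \<oplus> L c \<oplus> L d \<oplus> L f)" "\<not> Z (L v \<oplus> L c \<oplus> L e \<oplus> L f)" "\<not> Z (L v \<oplus> L d \<oplus> L e \<oplus> L f)" by (auto simp: eqZ lxs)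
    show ?thesis using False M P D2 N LD v(1) by (simp add: cnt_formula cntk_insert cntk_zero cntk_empty block_iff lxs)
  qed
qed


lemma C1p:
  assumes P: "p \<in> P" "q \<in> P" "c \<in> P" "d \<in> P" "e \<in> P" "f \<in> P" and D: "distinct [p,q,c,d,e,f]"
    and Y: "Z (L c \<oplus> L d \<oplus> L e \<oplus> L f)"
    and N: "\<not> Z (L p \<oplus> L q \<oplus> L c \<oplus> L d)" "\<not> Z (L p \<oplus> L q \<oplus> L c \<oplus> L e)" "\<not> Z (L p \<oplus> L q \<oplus> L c \<oplus> L f)" "\<not> Z (L p \<oplus> L q \<oplus> L d \<oplus> L e)" "\<not> Z (L p \<oplus> L q \<oplus> L d \<oplus> L f)" "\<not> Z (L p \<oplus> L q \<oplus> L e \<oplus> L f)"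
    and v: "v \<in> P" "v \<notin> {p,q,c,d,e,f}"
  shows "cnt (insert v {q,c,d,e,f}) = (if L v \<in> {L q \<oplus> L c \<oplus> L d, L q \<oplus> L c \<oplus> L e, L q \<oplus> L c \<oplus> L f} then 3 else 1)"
proof -
  have D2: "distinct [v,q,c,d,e,f]" using D v by auto
  have LD: "\<not> Z (L v \<oplus> L p)" "\<not> Z (L v \<oplus> L q)" "\<not> Z (L v \<oplus> L c)" "\<not> Z (L v \<oplus> L d)" "\<not> Z (L v \<oplus> L e)" "\<not> Z (L v \<oplus> L f)" "\<not> Z (L p \<oplus> L q)" "\<not> Z (L p \<oplus> L c)" "\<not> Z (L p \<oplus> L d)" "\<not> Z (L p \<oplus> L e)" "\<not> Z (L p \<oplus> L f)" "\<not> Z (L q \<oplus> L c)" "\<not> Z (L q \<oplus> L d)" "\<not> Z (L q \<oplus> L e)" "\<not> Z (L q \<oplus> L f)" "\<not> Z (L c \<oplus> L d)" "\<not> Z (L c \<oplus> L e)" "\<not> Z (L c \<oplus> L f)" "\<not> Z (L d \<oplus> L e)" "\<not> Z (L d \<oplus> L f)" "\<not> Z (L e \<oplus> L f)"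
    using P D v by (simp_all add: Ldist)
  have sb: "L f = L c \<oplus> L d \<oplus> L e" using Y(1) by (simp add: eqZ lxs)
  show ?thesis
  proof (cases "L v \<in> {L q \<oplus> L c \<oplus> L d, L q \<oplus> L c \<oplus> L e, L q \<oplus> L c \<oplus> L f}")
    case True
    hence "L v = L q \<oplus> L c \<oplus> L d \<or> L v = L q \<oplus> L c \<oplus> L e \<or> L v = L q \<oplus> L c \<oplus> L f" by simp
    thus ?thesis using P D2 Y N LD v(1) by (elim disjE) (simp_all add: cnt_formula cntk_insert cntk_zero cntk_empty block_iff lxs sb)
  next
    case False
    hence M: "\<not> Z (L v \<oplus> L q \<oplus> L c \<oplus> L d)" "\<not> Z (L v \<oplus> L q \<oplus> L c \<oplus> L e)" "\<not> Z (L v \<oplus> L q \<oplus> L c \<oplus> L f)" by (auto simp: eqZ lxs)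
    show ?thesis using False M P D2 Y N LD v(1) by (simp add: cnt_formula cntk_insert cntk_zero cntk_empty block_iff lxs sb)
  qed
qed

lemma C1c:
  assumes P: "p \<in> P" "q \<in> P" "c \<in> P" "d \<in> P" "e \<in> P" "f \<in> P" and D: "distinct [p,q,c,d,e,f]"
    and Y: "Z (L c \<oplus> L d \<oplus> L e \<oplus> L f)"
    and N: "\<not> Z (L p \<oplus> L q \<oplus> L c \<oplus> L d)" "\<not> Z (L p \<oplus> L q \<oplus> L c \<oplus> L e)" "\<not> Z (L p \<oplus> L q \<oplus> L c \<oplus> L f)" "\<not> Z (L p \<oplus> L q \<oplus> L d \<oplus> L e)" "\<not> Z (L p \<oplus> L q \<oplus> L d \<oplus> L f)" "\<not> Z (L p \<oplus> L q \<oplus> L e \<oplus> L f)"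
    and v: "v \<in> P" "v \<notin> {p,q,c,d,e,f}"
  shows "cnt (insert v {p,q,d,e,f}) = (if L v \<in> {L p \<oplus> L q \<oplus> L d, L p \<oplus> L q \<oplus> L e, L p \<oplus> L q \<oplus> L f, L p \<oplus> L d \<oplus> L e, L p \<oplus> L d \<oplus> L f, L p \<oplus> L e \<oplus> L f, L q \<oplus> L d \<oplus> L e, L q \<oplus> L d \<oplus> L f, L q \<oplus> L e \<oplus> L f} then 1 else 0)"
proof -
  have D2: "distinct [v,p,q,d,e,f]" using D v by auto
  have LD: "\<not> Z (L v \<oplus> L p)" "\<not> Z (L v \<oplus> L q)" "\<not> Z (L v \<oplus> L c)" "\<not> Z (L v \<oplus> L d)" "\<not> Z (L v \<oplus> L e)" "\<not> Z (L v \<oplus> L f)" "\<not> Z (L p \<oplus> L q)" "\<not> Z (L p \<oplus> L c)" "\<not> Z (L p \<oplus> L d)" "\<not> Z (L p \<oplus> L e)" "\<not> Z (L p \<oplus> L f)" "\<not> Z (L q \<oplus> L c)" "\<not> Z (L q \<oplus> L d)" "\<not> Z (L q \<oplus> L e)" "\<not> Z (L q \<oplus> L f)" "\<not> Z (L c \<oplus> L d)" "\<not> Z (L c \<oplus> L e)" "\<not> Z (L c \<oplus> L f)" "\<not> Z (L d \<oplus> L e)" "\<not> Z (L d \<oplus> L f)" "\<not> Z (L e \<oplus> L f)"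
    using P D v by (simp_all add: Ldist)
  have sb: "L c = L d \<oplus> L e \<oplus> L f" using Y(1) by (simp add: eqZ lxs)
  show ?thesis
  proof (cases "L v \<in> {L p \<oplus> L q \<oplus> L d, L p \<oplus> L q \<oplus> L e, L p \<oplus> L q \<oplus> L f, L p \<oplus> L d \<oplus> L e, L p \<oplus> L d \<oplus> L f, L p \<oplus> L e \<oplus> L f, L q \<oplus> L d \<oplus> L e, L q \<oplus> L d \<oplus> L f, L q \<oplus> L e \<oplus> L f}")
    case True
    hence "L v = L p \<oplus> L q \<oplus> L d \<or> L v = L p \<oplus> L q \<oplus> L e \<or> L v = L p \<oplus> L q \<oplus> L f \<or> L v = L p \<oplus> L d \<oplus> L e \<or> L v = L p \<oplus> L d \<oplus> L f \<or> L v = L p \<oplus> L e \<oplus> L f \<or> L v = L q \<oplus> L d \<oplus> L e \<or> L v = L q \<oplus> L d \<oplus> L f \<or> L v = L q \<oplus> L e \<oplus> L f" by simp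
    thus ?thesis using P D2 Y N LD v(1) by (elim disjE) (simp_all add: cnt_formula cntk_insert cntk_zero cntk_empty block_iff lxs sb)
  next
    case False
    hence M: "\<not> Z (L v \<oplus> L p \<oplus> L q \<oplus> L d)" "\<not> Z (L v \<oplus> L p \<oplus> L q \<oplus> L e)" "\<not> Z (L v \<oplus> L p \<oplus> L q \<oplus> L f)" "\<not> Z (L v \<oplus> L p \<oplus> L d \<oplus> L e)" "\<not> Z (L v \<oplus> L p \<oplus> L d \<oplus> L f)" "\<not> Z (L v \<oplus> L p \<oplus> L e \<oplus> L f)" "\<not> Z (L v \<oplus> L q \<oplus> L d \<oplus> L e)" "\<not> Z (L v \<oplus> L q \<oplus> L d \<oplus> L f)" "\<not> Z (L v \<oplus> L q \<oplus> L e \<oplus> L f)" by (auto simp: eqZ lxs)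
    show ?thesis using False M P D2 Y N LD v(1) by (simp add: cnt_formula cntk_insert cntk_zero cntk_empty block_iff lxs sb)
  qed
qed

lemma C3a:
  assumes P: "a \<in> P" "a2 \<in> P" "b \<in> P" "b2 \<in> P" "c \<in> P" "c2 \<in> P" and D: "distinct [a,a2,b,b2,c,c2]"
    and Y: "Z (L a \<oplus> L a2 \<oplus> L b \<oplus> L b2)" "Z (L a \<oplus> L a2 \<oplus> L c \<oplus> L c2)" "Z (L b \<oplus> L b2 \<oplus> L c \<oplus> L c2)"
    and v: "v \<in> P" "v \<notin> {a,a2,b,b2,c,c2}"
  shows "cnt (insert v {a2,b,b2,c,c2}) = (if L v \<in> {L a2 \<oplus> L b \<oplus> L c, L a2 \<oplus> L b \<oplus> L c2} then 3 else 1)"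
proof -
  have D2: "distinct [v,a2,b,b2,c,c2]" using D v by auto
  have LD: "\<not> Z (L v \<oplus> L a)" "\<not> Z (L v \<oplus> L a2)" "\<not> Z (L v \<oplus> L b)" "\<not> Z (L v \<oplus> L b2)" "\<not> Z (L v \<oplus> L c)" "\<not> Z (L v \<oplus> L c2)" "\<not> Z (L a \<oplus> L a2)" "\<not> Z (L a \<oplus> L b)" "\<not> Z (L a \<oplus> L b2)" "\<not> Z (L a \<oplus> L c)" "\<not> Z (L a \<oplus> L c2)" "\<not> Z (L a2 \<oplus> L b)" "\<not> Z (L a2 \<oplus> L b2)" "\<not> Z (L a2 \<oplus> L c)" "\<not> Z (L a2 \<oplus> L c2)" "\<not> Z (L b \<oplus> L b2)" "\<not> Z (L b \<oplus> L c)" "\<not> Z (L b \<oplus> L c2)" "\<not> Z (L b2 \<oplus> L c)" "\<not> Z (L b2 \<oplus> L c2)" "\<not> Z (L c \<oplus> L c2)"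
    using P D v by (simp_all add: Ldist)
  have sb: "L a2 = L a \<oplus> L b \<oplus> L b2" "L c2 = L b \<oplus> L b2 \<oplus> L c" using Y(1) Y(3) by (simp_all add: eqZ lxs)
  show ?thesis
  proof (cases "L v \<in> {L a2 \<oplus> L b \<oplus> L c, L a2 \<oplus> L b \<oplus> L c2}")
    case True
    hence "L v = L a2 \<oplus> L b \<oplus> L c \<or> L v = L a2 \<oplus> L b \<oplus> L c2" by simp
    thus ?thesis using P D2 Y LD v(1) by (elim disjE) (simp_all add: cnt_formula cntk_insert cntk_zero cntk_empty block_iff lxs sb)
  next
    case False
    hence M: "\<not> Z (L v \<oplus> L a2 \<oplus> L b \<oplus> L c)" "\<not> Z (L v \<oplus> L a2 \<oplus> L b \<oplus> L c2)" by (auto simp: eqZ lxs)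
    show ?thesis using False M P D2 Y LD v(1) by (simp add: cnt_formula cntk_insert cntk_zero cntk_empty block_iff lxs sb)
  qed
qed



lemma finP: "finite P" unfolding P_def by simp
lemma cardP: "card P = 2^m" unfolding P_def by simp

lemma iota_L: "i \<in> P \<Longrightarrow> iota (L i) = i"
proof -
  assume i: "i \<in> P"
  hence ij: "1 \<le> i" "i \<le> 2^m" by (auto simp: P_def)
  show ?thesis
  proof (cases "i = 2^m")
    case True thus ?thesis by (simp add: L_def iota_def)
  next
    case False
    hence "i < 2^m" using ij by auto
    thus ?thesis using ij by (simp add: L_def iota_def)
  qed
qed

lemma LP: "L ` P = {Lb g | g. g < 2^m}"
proof (rule set_eqI, rule iffI)
  fix r assume "r \<in> L ` P"
  thus "r \<in> {Lb g | g. g < 2^m}" by (auto simp: L_def)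
next
  fix r assume "r \<in> {Lb g | g. g < 2^m}"
  then obtain g where g: "r = Lb g" "g < 2^m" by auto
  show "r \<in> L ` P"
  proof (cases "g = 0")
    case True
    hence "r = L (2^m)" using g by (simp add: L_def)
    moreover have "2^m \<in> P" by (simp add: P_def)
    ultimately show ?thesis by blast
  next
    case False
    hence "r = L g" using g by (simp add: L_def)
    moreover have "g \<in> P" using g False by (simp add: P_def)
    ultimately show ?thesis by blast
  qed
qed

lemma L_iota: "r \<in> L ` P \<Longrightarrow> L (iota r) = r \<and> iota r \<in> P"
  using iota_L by auto

lemma xor_lt: "(a::nat) < 2^m \<Longrightarrow> b < 2^m \<Longrightarrow> xor a b < 2^m"
proof -
  assume "a < 2^m" "b < 2^m"
  hence "take_bit m a = a" "take_bit m b = b" by (simp_all add: take_bit_nat_eq_self_iff)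
  hence "take_bit m (xor a b) = xor a b" by (metis take_bit_xor)
  thus ?thesis by (metis take_bit_nat_eq_self_iff)
qed

lemma lx_clos: "r \<in> L ` P \<Longrightarrow> s \<in> L ` P \<Longrightarrow> r \<oplus> s \<in> L ` P"
  unfolding LP using xor_lt by auto

lemma Lclos3: "i \<in> P \<Longrightarrow> j \<in> P \<Longrightarrow> k \<in> P \<Longrightarrow> L i \<oplus> L j \<oplus> L k \<in> L ` P"
  by (intro lx_clos) auto

lemma count_gen:
  assumes x: "x \<subseteq> P" "card x = 6" and R: "finite R" "R \<subseteq> L ` P" "\<forall>r\<in>R. \<forall>w\<in>x. r \<noteq> L w"
    and g: "\<forall>v\<in>P - x. g v = (if L v \<in> R then k1 else (k2::nat))" and k: "k1 \<noteq> k2"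
  shows "card {v\<in>P - x. g v = k} = (if k = k1 then card R else if k = k2 then 2^m - 6 - card R else 0)"
proof -
  let ?S = "{v\<in>P - x. L v \<in> R}"
  have S: "?S = iota ` R"
  proof (rule set_eqI, rule iffI)
    fix v assume v: "v \<in> ?S"
    hence "v = iota (L v)" using iota_L by auto
    thus "v \<in> iota ` R" using v by blast
  next
    fix v assume "v \<in> iota ` R"
    then obtain r where r: "r \<in> R" "v = iota r" by blast
    have "L v = r" "v \<in> P" using L_iota r R(2) by auto
    moreover have "v \<notin> x" using R(3) r(1) \<open>L v = r\<close> by auto
    ultimately show "v \<in> ?S" using r by auto
  qed
  have inj: "inj_on iota R"
    by (rule inj_onI) (metis L_iota R(2) subsetD)
  have cS: "card ?S = card R" unfolding S using card_image[OF inj] .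
  have cPx: "card (P - x) = 2^m - 6" using x cardP finP by (simp add: card_Diff_subset finite_subset)
  show ?thesis
  proof (cases "k = k1")
    case True
    have "{v\<in>P - x. g v = k} = ?S"
    proof (rule Collect_cong)
      fix v show "(v \<in> P - x \<and> g v = k) = (v \<in> P - x \<and> L v \<in> R)"
        using g k True by (cases "v \<in> P - x"; cases "L v \<in> R"; auto)
    qed
    thus ?thesis using cS True by simp
  next
    case False
    show ?thesis
    proof (cases "k = k2")
      case True
      have e: "{v\<in>P - x. g v = k} = (P - x) - ?S"
      proof (rule set_eqI)
        fix v show "(v \<in> {v\<in>P - x. g v = k}) = (v \<in> (P - x) - ?S)"
          using g k True by (cases "v \<in> P - x"; cases "L v \<in> R"; auto)
      qed
      have "card ((P - x) - ?S) = card (P - x) - card ?S"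
        by (rule card_Diff_subset) (auto intro: finite_subset[OF _ finP])
      thus ?thesis using e cS cPx True False by simp
    next
      case False2: False
      have "{v\<in>P - x. g v = k} = {}"
      proof (rule set_eqI)
        fix v show "(v \<in> {v\<in>P - x. g v = k}) = (v \<in> {})"
          using g k False False2 by (cases "v \<in> P - x"; cases "L v \<in> R"; auto)
      qed
      hence c0: "card {v\<in>P - x. g v = k} = 0" by (simp only: card.empty)
      show ?thesis using c0 False False2 by simp
    qed
  qed
qed


lemma nbr_card:
  assumes xV: "x \<in> johnson_vertices (2^m) 6"
  shows "card {y. johnson_adj (2^m) 6 x y \<and> \<Phi> y} = (\<Sum>u\<in>x. card {v\<in>P - x. \<Phi> (insert v (x - {u}))})"
proof -
  have xP: "x \<subseteq> P" and cx: "card x = 6" using xV by (auto simp: johnson_vertices_def P_def)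
  have fx: "finite x" using xP finP finite_subset by blast
  let ?f = "\<lambda>(u,v). insert v (x - {u})"
  let ?S = "SIGMA u:x. {v\<in>P - x. \<Phi> (insert v (x - {u}))}"
  have eq: "{y. johnson_adj (2^m) 6 x y \<and> \<Phi> y} = ?f ` ?S"
  proof (rule set_eqI, rule iffI)
    fix y assume "y \<in> {y. johnson_adj (2^m) 6 x y \<and> \<Phi> y}"
    hence yV: "y \<subseteq> P" "card y = 6" and c5: "card (x \<inter> y) = 5" and Py: "\<Phi> y"
      by (auto simp: johnson_adj_def johnson_vertices_def P_def)
    have fy: "finite y" using yV finP finite_subset by blast
    have "card (x - y) = 1"
      using card_Diff_subset_Int[of x y] fx c5 cx by (simp add: Int_commute)
    then obtain u where u: "x - y = {u}" using card_1_singletonE by blast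
    have "card (y - x) = 1"
      using card_Diff_subset_Int[of y x] fy c5 yV by (simp add: Int_commute)
    then obtain v where v: "y - x = {v}" using card_1_singletonE by blast
    have uv: "u \<in> x" "v \<in> P - x" using u v yV by auto
    have "y = insert v (x - {u})"
    proof (rule set_eqI)
      fix z show "z \<in> y \<longleftrightarrow> z \<in> insert v (x - {u})"
        using u v by (metis Diff_iff insert_iff singletonD singletonI)
    qed
    thus "y \<in> ?f ` ?S" using uv Py by force
  next
    fix y assume "y \<in> ?f ` ?S"
    then obtain u v where uv: "u \<in> x" "v \<in> P" "v \<notin> x" "\<Phi> (insert v (x - {u}))" "y = insert v (x - {u})"
      by auto
    have fxu: "finite (x - {u})" using fx by simp
    have c1: "card (x - {u}) = 5" using uv cx fx by (simp add: card_Diff_singleton)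
    have cy: "card y = 6" using uv c1 fxu by simp
    have yP: "y \<subseteq> P" using uv xP by auto
    have "x \<inter> y = x - {u}" using uv by auto
    hence "card (x \<inter> y) = 5" using c1 by simp
    thus "y \<in> {y. johnson_adj (2^m) 6 x y \<and> \<Phi> y}"
      using xV yP cy uv by (auto simp: johnson_adj_def johnson_vertices_def P_def)
  qed
  have inj: "inj_on ?f ?S"
  proof (rule inj_onI)
    fix p1 p2 assume p1: "p1 \<in> ?S" and p2: "p2 \<in> ?S" and e: "?f p1 = ?f p2"
    obtain u1 v1 where 1: "p1 = (u1,v1)" "u1 \<in> x" "v1 \<notin> x" using p1 by auto
    obtain u2 v2 where 2: "p2 = (u2,v2)" "u2 \<in> x" "v2 \<notin> x" using p2 by auto
    have e2: "insert v1 (x - {u1}) = insert v2 (x - {u2})" using e 1 2 by simp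
    have "v1 = v2" using e2 1 2 by (metis DiffD1 insertCI insertE)
    moreover have "u1 = u2"
    proof (rule ccontr)
      assume "u1 \<noteq> u2"
      hence "u1 \<in> insert v2 (x - {u2})" using 1 by auto
      hence "u1 \<in> insert v1 (x - {u1})" using e2 by simp
      thus False using 1 by auto
    qed
    ultimately show "p1 = p2" using 1 2 by simp
  qed
  have "card (?f ` ?S) = card ?S" by (rule card_image[OF inj])
  also have "\<dots> = (\<Sum>u\<in>x. card {v\<in>P - x. \<Phi> (insert v (x - {u}))})"
    by (rule card_SigmaI) (use fx finP in auto)
  finally show ?thesis using eq by simp
qed

lemma C0cnt:
  assumes P: "a \<in> P" "b \<in> P" "c \<in> P" "d \<in> P" "e \<in> P" "f \<in> P" and D: "distinct [a,b,c,d,e,f]"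
    and N: "\<not> Z (L a \<oplus> L b \<oplus> L c \<oplus> L d)" "\<not> Z (L a \<oplus> L b \<oplus> L c \<oplus> L e)" "\<not> Z (L a \<oplus> L b \<oplus> L c \<oplus> L f)" "\<not> Z (L a \<oplus> L b \<oplus> L d \<oplus> L e)" "\<not> Z (L a \<oplus> L b \<oplus> L d \<oplus> L f)" "\<not> Z (L a \<oplus> L b \<oplus> L e \<oplus> L f)" "\<not> Z (L a \<oplus> L c \<oplus> L d \<oplus> L e)" "\<not> Z (L a \<oplus> L c \<oplus> L d \<oplus> L f)" "\<not> Z (L a \<oplus> L c \<oplus> L e \<oplus> L f)" "\<not> Z (L a \<oplus> L d \<oplus> L e \<oplus> L f)" "\<not> Z (L b \<oplus> L c \<oplus> L d \<oplus> L e)" "\<not> Z (L b \<oplus> L c \<oplus> L d \<oplus> L f)" "\<not> Z (L b \<oplus> L c \<oplus> L e \<oplus> L f)" "\<not> Z (L b \<oplus> L d \<oplus> L e \<oplus> L f)" "\<not> Z (L c \<oplus> L d \<oplus> L e \<oplus> L f)"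
    and X: "x = {a,b,c,d,e,f}"
  shows "card {v\<in>P - x. cnt (insert v (x - {a})) = k} = (if k = 1 then 10 else if k = 0 then 2^m - 6 - 10 else 0)"
proof -
  have xu: "x - {a} = {b,c,d,e,f}" using X D by auto
  have LD: "\<not> Z (L a \<oplus> L b)" "\<not> Z (L a \<oplus> L c)" "\<not> Z (L a \<oplus> L d)" "\<not> Z (L a \<oplus> L e)" "\<not> Z (L a \<oplus> L f)" "\<not> Z (L b \<oplus> L c)" "\<not> Z (L b \<oplus> L d)" "\<not> Z (L b \<oplus> L e)" "\<not> Z (L b \<oplus> L f)" "\<not> Z (L c \<oplus> L d)" "\<not> Z (L c \<oplus> L e)" "\<not> Z (L c \<oplus> L f)" "\<not> Z (L d \<oplus> L e)" "\<not> Z (L d \<oplus> L f)" "\<not> Z (L e \<oplus> L f)"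
    using P D by (simp_all add: Ldist)
  let ?R = "{L b \<oplus> L c \<oplus> L d, L b \<oplus> L c \<oplus> L e, L b \<oplus> L c \<oplus> L f, L b \<oplus> L d \<oplus> L e, L b \<oplus> L d \<oplus> L f, L b \<oplus> L e \<oplus> L f, L c \<oplus> L d \<oplus> L e, L c \<oplus> L d \<oplus> L f, L c \<oplus> L e \<oplus> L f, L d \<oplus> L e \<oplus> L f}"
  have cR: "card ?R = 10" using N LD by (simp add: eqZ lxs card_insert_if)
  have RP: "?R \<subseteq> L ` P" using P by (simp add: Lclos3)
  have Rx: "\<forall>r\<in>?R. \<forall>w\<in>x. r \<noteq> L w" unfolding X using N LD by (simp add: eqZ lxs)
  have g: "\<forall>v\<in>P - x. cnt (insert v (x - {a})) = (if L v \<in> ?R then 1 else 0)"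
  proof
    fix v assume "v \<in> P - x"
    thus "cnt (insert v (x - {a})) = (if L v \<in> ?R then 1 else 0)"
      unfolding xu using C0u[OF P D N, of v] X by auto
  qed
  have xP: "x \<subseteq> P" using X P by auto
  have cx: "card x = 6" using X D by simp
  show ?thesis using count_gen[OF xP cx _ RP Rx g] cR by simp
qed

lemma C1pcnt:
  assumes P: "p \<in> P" "q \<in> P" "c \<in> P" "d \<in> P" "e \<in> P" "f \<in> P" and D: "distinct [p,q,c,d,e,f]"
    and Y: "Z (L c \<oplus> L d \<oplus> L e \<oplus> L f)"
    and N: "\<not> Z (L p \<oplus> L q \<oplus> L c \<oplus> L d)" "\<not> Z (L p \<oplus> L q \<oplus> L c \<oplus> L e)" "\<not> Z (L p \<oplus> L q \<oplus> L c \<oplus> L f)" "\<not> Z (L p \<oplus> L q \<oplus> L d \<oplus> L e)" "\<not> Z (L p \<oplus> L q \<oplus> L d \<oplus> L f)" "\<not> Z (L p \<oplus> L q \<oplus> L e \<oplus> L f)"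
    and X: "x = {p,q,c,d,e,f}"
  shows "card {v\<in>P - x. cnt (insert v (x - {p})) = k} = (if k = 3 then 3 else if k = 1 then 2^m - 6 - 3 else 0)"
proof -
  have xu: "x - {p} = {q,c,d,e,f}" using X D by auto
  have LD: "\<not> Z (L p \<oplus> L q)" "\<not> Z (L p \<oplus> L c)" "\<not> Z (L p \<oplus> L d)" "\<not> Z (L p \<oplus> L e)" "\<not> Z (L p \<oplus> L f)" "\<not> Z (L q \<oplus> L c)" "\<not> Z (L q \<oplus> L d)" "\<not> Z (L q \<oplus> L e)" "\<not> Z (L q \<oplus> L f)" "\<not> Z (L c \<oplus> L d)" "\<not> Z (L c \<oplus> L e)" "\<not> Z (L c \<oplus> L f)" "\<not> Z (L d \<oplus> L e)" "\<not> Z (L d \<oplus> L f)" "\<not> Z (L e \<oplus> L f)"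
    using P D by (simp_all add: Ldist)
  have sb: "L f = L c \<oplus> L d \<oplus> L e" using Y(1) by (simp add: eqZ lxs)
  let ?R = "{L q \<oplus> L c \<oplus> L d, L q \<oplus> L c \<oplus> L e, L q \<oplus> L c \<oplus> L f}"
  have cR: "card ?R = 3" using Y N LD by (simp add: eqZ lxs card_insert_if sb)
  have RP: "?R \<subseteq> L ` P" using P by (simp add: Lclos3)
  have Rx: "\<forall>r\<in>?R. \<forall>w\<in>x. r \<noteq> L w" unfolding X using Y N LD by (simp add: eqZ lxs sb)
  have g: "\<forall>v\<in>P - x. cnt (insert v (x - {p})) = (if L v \<in> ?R then 3 else 1)"
  proof
    fix v assume "v \<in> P - x"
    thus "cnt (insert v (x - {p})) = (if L v \<in> ?R then 3 else 1)"
      unfolding xu using C1p[OF P D Y N, of v] X by auto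
  qed
  have xP: "x \<subseteq> P" using X P by auto
  have cx: "card x = 6" using X D by simp
  show ?thesis using count_gen[OF xP cx _ RP Rx g] cR by simp
qed

lemma C1ccnt:
  assumes P: "p \<in> P" "q \<in> P" "c \<in> P" "d \<in> P" "e \<in> P" "f \<in> P" and D: "distinct [p,q,c,d,e,f]"
    and Y: "Z (L c \<oplus> L d \<oplus> L e \<oplus> L f)"
    and N: "\<not> Z (L p \<oplus> L q \<oplus> L c \<oplus> L d)" "\<not> Z (L p \<oplus> L q \<oplus> L c \<oplus> L e)" "\<not> Z (L p \<oplus> L q \<oplus> L c \<oplus> L f)" "\<not> Z (L p \<oplus> L q \<oplus> L d \<oplus> L e)" "\<not> Z (L p \<oplus> L q \<oplus> L d \<oplus> L f)" "\<not> Z (L p \<oplus> L q \<oplus> L e \<oplus> L f)"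
    and X: "x = {p,q,c,d,e,f}"
  shows "card {v\<in>P - x. cnt (insert v (x - {c})) = k} = (if k = 1 then 9 else if k = 0 then 2^m - 6 - 9 else 0)"
proof -
  have xu: "x - {c} = {p,q,d,e,f}" using X D by auto
  have LD: "\<not> Z (L p \<oplus> L q)" "\<not> Z (L p \<oplus> L c)" "\<not> Z (L p \<oplus> L d)" "\<not> Z (L p \<oplus> L e)" "\<not> Z (L p \<oplus> L f)" "\<not> Z (L q \<oplus> L c)" "\<not> Z (L q \<oplus> L d)" "\<not> Z (L q \<oplus> L e)" "\<not> Z (L q \<oplus> L f)" "\<not> Z (L c \<oplus> L d)" "\<not> Z (L c \<oplus> L e)" "\<not> Z (L c \<oplus> L f)" "\<not> Z (L d \<oplus> L e)" "\<not> Z (L d \<oplus> L f)" "\<not> Z (L e \<oplus> L f)"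
    using P D by (simp_all add: Ldist)
  have sb: "L c = L d \<oplus> L e \<oplus> L f" using Y(1) by (simp add: eqZ lxs)
  let ?R = "{L p \<oplus> L q \<oplus> L d, L p \<oplus> L q \<oplus> L e, L p \<oplus> L q \<oplus> L f, L p \<oplus> L d \<oplus> L e, L p \<oplus> L d \<oplus> L f, L p \<oplus> L e \<oplus> L f, L q \<oplus> L d \<oplus> L e, L q \<oplus> L d \<oplus> L f, L q \<oplus> L e \<oplus> L f}"
  have cR: "card ?R = 9" using Y N LD by (simp add: eqZ lxs card_insert_if sb)
  have RP: "?R \<subseteq> L ` P" using P by (simp add: Lclos3)
  have Rx: "\<forall>r\<in>?R. \<forall>w\<in>x. r \<noteq> L w" unfolding X using Y N LD by (simp add: eqZ lxs sb)
  have g: "\<forall>v\<in>P - x. cnt (insert v (x - {c})) = (if L v \<in> ?R then 1 else 0)"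
  proof
    fix v assume "v \<in> P - x"
    thus "cnt (insert v (x - {c})) = (if L v \<in> ?R then 1 else 0)"
      unfolding xu using C1c[OF P D Y N, of v] X by auto
  qed
  have xP: "x \<subseteq> P" using X P by auto
  have cx: "card x = 6" using X D by simp
  show ?thesis using count_gen[OF xP cx _ RP Rx g] cR by simp
qed

lemma C3cnt:
  assumes P: "a \<in> P" "a2 \<in> P" "b \<in> P" "b2 \<in> P" "c \<in> P" "c2 \<in> P" and D: "distinct [a,a2,b,b2,c,c2]"
    and Y: "Z (L a \<oplus> L a2 \<oplus> L b \<oplus> L b2)" "Z (L a \<oplus> L a2 \<oplus> L c \<oplus> L c2)" "Z (L b \<oplus> L b2 \<oplus> L c \<oplus> L c2)"
    and X: "x = {a,a2,b,b2,c,c2}"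
  shows "card {v\<in>P - x. cnt (insert v (x - {a})) = k} = (if k = 3 then 2 else if k = 1 then 2^m - 6 - 2 else 0)"
proof -
  have xu: "x - {a} = {a2,b,b2,c,c2}" using X D by auto
  have LD: "\<not> Z (L a \<oplus> L a2)" "\<not> Z (L a \<oplus> L b)" "\<not> Z (L a \<oplus> L b2)" "\<not> Z (L a \<oplus> L c)" "\<not> Z (L a \<oplus> L c2)" "\<not> Z (L a2 \<oplus> L b)" "\<not> Z (L a2 \<oplus> L b2)" "\<not> Z (L a2 \<oplus> L c)" "\<not> Z (L a2 \<oplus> L c2)" "\<not> Z (L b \<oplus> L b2)" "\<not> Z (L b \<oplus> L c)" "\<not> Z (L b \<oplus> L c2)" "\<not> Z (L b2 \<oplus> L c)" "\<not> Z (L b2 \<oplus> L c2)" "\<not> Z (L c \<oplus> L c2)"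
    using P D by (simp_all add: Ldist)
  have sb: "L a2 = L a \<oplus> L b \<oplus> L b2" "L c2 = L b \<oplus> L b2 \<oplus> L c" using Y(1) Y(3) by (simp_all add: eqZ lxs)
  let ?R = "{L a2 \<oplus> L b \<oplus> L c, L a2 \<oplus> L b \<oplus> L c2}"
  have cR: "card ?R = 2" using Y LD by (simp add: eqZ lxs card_insert_if sb)
  have RP: "?R \<subseteq> L ` P" using P by (simp add: Lclos3)
  have Rx: "\<forall>r\<in>?R. \<forall>w\<in>x. r \<noteq> L w" unfolding X using Y LD by (simp add: eqZ lxs sb)
  have g: "\<forall>v\<in>P - x. cnt (insert v (x - {a})) = (if L v \<in> ?R then 3 else 1)"
  proof
    fix v assume "v \<in> P - x"
    thus "cnt (insert v (x - {a})) = (if L v \<in> ?R then 3 else 1)"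
      unfolding xu using C3a[OF P D Y, of v] X by auto
  qed
  have xP: "x \<subseteq> P" using X P by auto
  have cx: "card x = 6" using X D by simp
  show ?thesis using count_gen[OF xP cx _ RP Rx g] cR by simp
qed


lemma V0:
  assumes P: "a \<in> P" "b \<in> P" "c \<in> P" "d \<in> P" "e \<in> P" "f \<in> P" and D: "distinct [a,b,c,d,e,f]"
    and N: "\<not> Z (L a \<oplus> L b \<oplus> L c \<oplus> L d)" "\<not> Z (L a \<oplus> L b \<oplus> L c \<oplus> L e)" "\<not> Z (L a \<oplus> L b \<oplus> L c \<oplus> L f)" "\<not> Z (L a \<oplus> L b \<oplus> L d \<oplus> L e)" "\<not> Z (L a \<oplus> L b \<oplus> L d \<oplus> L f)" "\<not> Z (L a \<oplus> L b \<oplus> L e \<oplus> L f)" "\<not> Z (L a \<oplus> L c \<oplus> L d \<oplus> L e)" "\<not> Z (L a \<oplus> L c \<oplus> L d \<oplus> L f)" "\<not> Z (L a \<oplus> L c \<oplus> L e \<oplus> L f)" "\<not> Z (L a \<oplus> L d \<oplus> L e \<oplus> L f)" "\<not> Z (L b \<oplus> L c \<oplus> L d \<oplus> L e)" "\<not> Z (L b \<oplus> L c \<oplus> L d \<oplus> L f)" "\<not> Z (L b \<oplus> L c \<oplus> L e \<oplus> L f)" "\<not> Z (L b \<oplus> L d \<oplus> L e \<oplus> L f)" "\<not> Z (L c \<oplus> L d \<oplus> L e \<oplus> L f)"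
    and X: "x = {a,b,c,d,e,f}"
  shows "card {y. johnson_adj (2^m) 6 x y \<and> cnt y = k} = (if k = 1 then 60 else if k = 0 then 6 * (2^m - 16) else 0)" and "cnt x = 0"
proof -
  have xV: "x \<in> johnson_vertices (2^m) 6" using X P D by (simp add: johnson_vertices_def P_def)
  define h where "h u = card {v\<in>P - x. cnt (insert v (x - {u})) = k}" for u
  have s: "card {y. johnson_adj (2^m) 6 x y \<and> cnt y = k} = (\<Sum>u\<in>x. h u)" unfolding h_def by (rule nbr_card[OF xV])
  have s2: "(\<Sum>u\<in>x. h u) = h a + h b + h c + h d + h e + h f" using X D by simp
  have h0: "h a = (if k = 1 then 10 else if k = 0 then 2^m - 6 - 10 else 0)"
    unfolding h_def by (rule C0cnt[of a b c d e f]) (use P D N X in \<open>auto simp: lxs insert_commute\<close>)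
  have h1: "h b = (if k = 1 then 10 else if k = 0 then 2^m - 6 - 10 else 0)"
    unfolding h_def by (rule C0cnt[of b a c d e f]) (use P D N X in \<open>auto simp: lxs insert_commute\<close>)
  have h2: "h c = (if k = 1 then 10 else if k = 0 then 2^m - 6 - 10 else 0)"
    unfolding h_def by (rule C0cnt[of c a b d e f]) (use P D N X in \<open>auto simp: lxs insert_commute\<close>)
  have h3: "h d = (if k = 1 then 10 else if k = 0 then 2^m - 6 - 10 else 0)"
    unfolding h_def by (rule C0cnt[of d a b c e f]) (use P D N X in \<open>auto simp: lxs insert_commute\<close>)
  have h4: "h e = (if k = 1 then 10 else if k = 0 then 2^m - 6 - 10 else 0)"
    unfolding h_def by (rule C0cnt[of e a b c d f]) (use P D N X in \<open>auto simp: lxs insert_commute\<close>)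
  have h5: "h f = (if k = 1 then 10 else if k = 0 then 2^m - 6 - 10 else 0)"
    unfolding h_def by (rule C0cnt[of f a b c d e]) (use P D N X in \<open>auto simp: lxs insert_commute\<close>)
  show "card {y. johnson_adj (2^m) 6 x y \<and> cnt y = k} = (if k = 1 then 60 else if k = 0 then 6 * (2^m - 16) else 0)"
    unfolding s s2 h0 h1 h2 h3 h4 h5 by auto
  have LD: "\<not> Z (L a \<oplus> L b)" "\<not> Z (L a \<oplus> L c)" "\<not> Z (L a \<oplus> L d)" "\<not> Z (L a \<oplus> L e)" "\<not> Z (L a \<oplus> L f)" "\<not> Z (L b \<oplus> L c)" "\<not> Z (L b \<oplus> L d)" "\<not> Z (L b \<oplus> L e)" "\<not> Z (L b \<oplus> L f)" "\<not> Z (L c \<oplus> L d)" "\<not> Z (L c \<oplus> L e)" "\<not> Z (L c \<oplus> L f)" "\<not> Z (L d \<oplus> L e)" "\<not> Z (L d \<oplus> L f)" "\<not> Z (L e \<oplus> L f)"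
    using P D by (simp_all add: Ldist)
  show "cnt x = 0" using P D N X LD by (simp add: cnt_formula cntk_insert cntk_zero cntk_empty block_iff lxs)
qed

lemma V1:
  assumes P: "p \<in> P" "q \<in> P" "c \<in> P" "d \<in> P" "e \<in> P" "f \<in> P" and D: "distinct [p,q,c,d,e,f]"
    and Y: "Z (L c \<oplus> L d \<oplus> L e \<oplus> L f)"
    and N: "\<not> Z (L p \<oplus> L q \<oplus> L c \<oplus> L d)" "\<not> Z (L p \<oplus> L q \<oplus> L c \<oplus> L e)" "\<not> Z (L p \<oplus> L q \<oplus> L c \<oplus> L f)" "\<not> Z (L p \<oplus> L q \<oplus> L d \<oplus> L e)" "\<not> Z (L p \<oplus> L q \<oplus> L d \<oplus> L f)" "\<not> Z (L p \<oplus> L q \<oplus> L e \<oplus> L f)"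
    and X: "x = {p,q,c,d,e,f}"
  shows "card {y. johnson_adj (2^m) 6 x y \<and> cnt y = k} = (if k = 3 then 6 else if k = 1 then 2 * (2^m - 9) + 36 else if k = 0 then 4 * (2^m - 15) else 0)" and "cnt x = 1"
proof -
  have xV: "x \<in> johnson_vertices (2^m) 6" using X P D by (simp add: johnson_vertices_def P_def)
  define h where "h u = card {v\<in>P - x. cnt (insert v (x - {u})) = k}" for u
  have s: "card {y. johnson_adj (2^m) 6 x y \<and> cnt y = k} = (\<Sum>u\<in>x. h u)" unfolding h_def by (rule nbr_card[OF xV])
  have s2: "(\<Sum>u\<in>x. h u) = h p + h q + h c + h d + h e + h f" using X D by simp
  have h0: "h p = (if k = 3 then 3 else if k = 1 then 2^m - 6 - 3 else 0)"
    unfolding h_def by (rule C1pcnt[of p q c d e f]) (use P D Y N X in \<open>auto simp: lxs insert_commute\<close>)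
  have h1: "h q = (if k = 3 then 3 else if k = 1 then 2^m - 6 - 3 else 0)"
    unfolding h_def by (rule C1pcnt[of q p c d e f]) (use P D Y N X in \<open>auto simp: lxs insert_commute\<close>)
  have h2: "h c = (if k = 1 then 9 else if k = 0 then 2^m - 6 - 9 else 0)"
    unfolding h_def by (rule C1ccnt[of p q c d e f]) (use P D Y N X in \<open>auto simp: lxs insert_commute\<close>)
  have h3: "h d = (if k = 1 then 9 else if k = 0 then 2^m - 6 - 9 else 0)"
    unfolding h_def by (rule C1ccnt[of p q d c e f]) (use P D Y N X in \<open>auto simp: lxs insert_commute\<close>)
  have h4: "h e = (if k = 1 then 9 else if k = 0 then 2^m - 6 - 9 else 0)"
    unfolding h_def by (rule C1ccnt[of p q e c d f]) (use P D Y N X in \<open>auto simp: lxs insert_commute\<close>)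
  have h5: "h f = (if k = 1 then 9 else if k = 0 then 2^m - 6 - 9 else 0)"
    unfolding h_def by (rule C1ccnt[of p q f c d e]) (use P D Y N X in \<open>auto simp: lxs insert_commute\<close>)
  show "card {y. johnson_adj (2^m) 6 x y \<and> cnt y = k} = (if k = 3 then 6 else if k = 1 then 2 * (2^m - 9) + 36 else if k = 0 then 4 * (2^m - 15) else 0)"
    unfolding s s2 h0 h1 h2 h3 h4 h5 by auto
  have sb: "L f = L c \<oplus> L d \<oplus> L e" using Y(1) by (simp add: eqZ lxs)
  have LD: "\<not> Z (L p \<oplus> L q)" "\<not> Z (L p \<oplus> L c)" "\<not> Z (L p \<oplus> L d)" "\<not> Z (L p \<oplus> L e)" "\<not> Z (L p \<oplus> L f)" "\<not> Z (L q \<oplus> L c)" "\<not> Z (L q \<oplus> L d)" "\<not> Z (L q \<oplus> L e)" "\<not> Z (L q \<oplus> L f)" "\<not> Z (L c \<oplus> L d)" "\<not> Z (L c \<oplus> L e)" "\<not> Z (L c \<oplus> L f)" "\<not> Z (L d \<oplus> L e)" "\<not> Z (L d \<oplus> L f)" "\<not> Z (L e \<oplus> L f)"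
    using P D by (simp_all add: Ldist)
  show "cnt x = 1" using P D Y N X LD by (simp add: cnt_formula cntk_insert cntk_zero cntk_empty block_iff lxs sb)
qed

lemma V3:
  assumes P: "a \<in> P" "a2 \<in> P" "b \<in> P" "b2 \<in> P" "c \<in> P" "c2 \<in> P" and D: "distinct [a,a2,b,b2,c,c2]"
    and Y: "Z (L a \<oplus> L a2 \<oplus> L b \<oplus> L b2)" "Z (L a \<oplus> L a2 \<oplus> L c \<oplus> L c2)" "Z (L b \<oplus> L b2 \<oplus> L c \<oplus> L c2)"
    and X: "x = {a,a2,b,b2,c,c2}"
  shows "card {y. johnson_adj (2^m) 6 x y \<and> cnt y = k} = (if k = 3 then 12 else if k = 1 then 6 * (2^m - 8) else 0)" and "cnt x = 3"
proof -
  have xV: "x \<in> johnson_vertices (2^m) 6" using X P D by (simp add: johnson_vertices_def P_def)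
  define h where "h u = card {v\<in>P - x. cnt (insert v (x - {u})) = k}" for u
  have s: "card {y. johnson_adj (2^m) 6 x y \<and> cnt y = k} = (\<Sum>u\<in>x. h u)" unfolding h_def by (rule nbr_card[OF xV])
  have s2: "(\<Sum>u\<in>x. h u) = h a + h a2 + h b + h b2 + h c + h c2" using X D by simp
  have h0: "h a = (if k = 3 then 2 else if k = 1 then 2^m - 6 - 2 else 0)"
    unfolding h_def by (rule C3cnt[of a a2 b b2 c c2]) (use P D Y X in \<open>auto simp: lxs insert_commute\<close>)
  have h1: "h a2 = (if k = 3 then 2 else if k = 1 then 2^m - 6 - 2 else 0)"
    unfolding h_def by (rule C3cnt[of a2 a b b2 c c2]) (use P D Y X in \<open>auto simp: lxs insert_commute\<close>)
  have h2: "h b = (if k = 3 then 2 else if k = 1 then 2^m - 6 - 2 else 0)"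
    unfolding h_def by (rule C3cnt[of b b2 a a2 c c2]) (use P D Y X in \<open>auto simp: lxs insert_commute\<close>)
  have h3: "h b2 = (if k = 3 then 2 else if k = 1 then 2^m - 6 - 2 else 0)"
    unfolding h_def by (rule C3cnt[of b2 b a a2 c c2]) (use P D Y X in \<open>auto simp: lxs insert_commute\<close>)
  have h4: "h c = (if k = 3 then 2 else if k = 1 then 2^m - 6 - 2 else 0)"
    unfolding h_def by (rule C3cnt[of c c2 a a2 b b2]) (use P D Y X in \<open>auto simp: lxs insert_commute\<close>)
  have h5: "h c2 = (if k = 3 then 2 else if k = 1 then 2^m - 6 - 2 else 0)"
    unfolding h_def by (rule C3cnt[of c2 c a a2 b b2]) (use P D Y X in \<open>auto simp: lxs insert_commute\<close>)
  show "card {y. johnson_adj (2^m) 6 x y \<and> cnt y = k} = (if k = 3 then 12 else if k = 1 then 6 * (2^m - 8) else 0)"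
    unfolding s s2 h0 h1 h2 h3 h4 h5 by auto
  have sb: "L a2 = L a \<oplus> L b \<oplus> L b2" "L c2 = L b \<oplus> L b2 \<oplus> L c" using Y(1) Y(3) by (simp_all add: eqZ lxs)
  have LD: "\<not> Z (L a \<oplus> L a2)" "\<not> Z (L a \<oplus> L b)" "\<not> Z (L a \<oplus> L b2)" "\<not> Z (L a \<oplus> L c)" "\<not> Z (L a \<oplus> L c2)" "\<not> Z (L a2 \<oplus> L b)" "\<not> Z (L a2 \<oplus> L b2)" "\<not> Z (L a2 \<oplus> L c)" "\<not> Z (L a2 \<oplus> L c2)" "\<not> Z (L b \<oplus> L b2)" "\<not> Z (L b \<oplus> L c)" "\<not> Z (L b \<oplus> L c2)" "\<not> Z (L b2 \<oplus> L c)" "\<not> Z (L b2 \<oplus> L c2)" "\<not> Z (L c \<oplus> L c2)"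
    using P D by (simp_all add: Ldist)
  show "cnt x = 3" using P D Y X LD by (simp add: cnt_formula cntk_insert cntk_zero cntk_empty block_iff lxs sb)
qed


lemma noblock:
  assumes nb: "\<forall>B\<in>Q. \<not> B \<subseteq> x" and s: "{a,b,c,d} \<subseteq> x" and P: "a \<in> P" "b \<in> P" "c \<in> P" "d \<in> P"
   and D: "distinct [a,b,c,d]" shows "\<not> Z (L a \<oplus> L b \<oplus> L c \<oplus> L d)"
proof
  assume "Z (L a \<oplus> L b \<oplus> L c \<oplus> L d)"
  hence "{a,b,c,d} \<in> Q" using block_iff[OF P D] by simp
  thus False using nb s by blast
qed

definition Nb :: "nat set \<Rightarrow> nat \<Rightarrow> nat" where
  "Nb x k = card {y. johnson_adj (2^m) 6 x y \<and> cnt y = k}"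

definition F0 :: "nat \<Rightarrow> nat" where "F0 k = (if k = 1 then 60 else if k = 0 then 6 * (2^m - 16) else 0)"
definition F1 :: "nat \<Rightarrow> nat" where "F1 k = (if k = 3 then 6 else if k = 1 then 2 * (2^m - 9) + 36 else if k = 0 then 4 * (2^m - 15) else 0)"
definition F3 :: "nat \<Rightarrow> nat" where "F3 k = (if k = 3 then 12 else if k = 1 then 6 * (2^m - 8) else 0)"

lemma classify:
  assumes xV: "x \<in> johnson_vertices (2^m) 6"
  shows "(cnt x = 0 \<and> (\<forall>k. Nb x k = F0 k)) \<or> (cnt x = 1 \<and> (\<forall>k. Nb x k = F1 k)) \<or> (cnt x = 3 \<and> (\<forall>k. Nb x k = F3 k))"
proof -
  have xP: "x \<subseteq> P" and cx: "card x = 6" using xV by (auto simp: johnson_vertices_def P_def)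
  show ?thesis
  proof (cases "\<exists>B\<in>Q. B \<subseteq> x")
    case False
    hence nb: "\<forall>B\<in>Q. \<not> B \<subseteq> x" by blast
    obtain a b c d e f where D: "distinct [a,b,c,d,e,f]" and X: "x = {a,b,c,d,e,f}" using card6[OF cx] by blast
    have P: "a \<in> P" "b \<in> P" "c \<in> P" "d \<in> P" "e \<in> P" "f \<in> P" using xP X by auto
    have N0: "\<not> Z (L a \<oplus> L b \<oplus> L c \<oplus> L d)" by (rule noblock[OF nb]) (use X P D in simp_all)
    have N1: "\<not> Z (L a \<oplus> L b \<oplus> L c \<oplus> L e)" by (rule noblock[OF nb]) (use X P D in simp_all)
    have N2: "\<not> Z (L a \<oplus> L b \<oplus> L c \<oplus> L f)" by (rule noblock[OF nb]) (use X P D in simp_all)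
    have N3: "\<not> Z (L a \<oplus> L b \<oplus> L d \<oplus> L e)" by (rule noblock[OF nb]) (use X P D in simp_all)
    have N4: "\<not> Z (L a \<oplus> L b \<oplus> L d \<oplus> L f)" by (rule noblock[OF nb]) (use X P D in simp_all)
    have N5: "\<not> Z (L a \<oplus> L b \<oplus> L e \<oplus> L f)" by (rule noblock[OF nb]) (use X P D in simp_all)
    have N6: "\<not> Z (L a \<oplus> L c \<oplus> L d \<oplus> L e)" by (rule noblock[OF nb]) (use X P D in simp_all)
    have N7: "\<not> Z (L a \<oplus> L c \<oplus> L d \<oplus> L f)" by (rule noblock[OF nb]) (use X P D in simp_all)
    have N8: "\<not> Z (L a \<oplus> L c \<oplus> L e \<oplus> L f)" by (rule noblock[OF nb]) (use X P D in simp_all)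
    have N9: "\<not> Z (L a \<oplus> L d \<oplus> L e \<oplus> L f)" by (rule noblock[OF nb]) (use X P D in simp_all)
    have N10: "\<not> Z (L b \<oplus> L c \<oplus> L d \<oplus> L e)" by (rule noblock[OF nb]) (use X P D in simp_all)
    have N11: "\<not> Z (L b \<oplus> L c \<oplus> L d \<oplus> L f)" by (rule noblock[OF nb]) (use X P D in simp_all)
    have N12: "\<not> Z (L b \<oplus> L c \<oplus> L e \<oplus> L f)" by (rule noblock[OF nb]) (use X P D in simp_all)
    have N13: "\<not> Z (L b \<oplus> L d \<oplus> L e \<oplus> L f)" by (rule noblock[OF nb]) (use X P D in simp_all)
    have N14: "\<not> Z (L c \<oplus> L d \<oplus> L e \<oplus> L f)" by (rule noblock[OF nb]) (use X P D in simp_all)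
    note W = V0[OF P D N0 N1 N2 N3 N4 N5 N6 N7 N8 N9 N10 N11 N12 N13 N14 X]
    have V: "\<forall>k. Nb x k = F0 k" "cnt x = 0" unfolding Nb_def F0_def using W by blast+
    thus ?thesis by blast
  next
    case True
    then obtain B where B: "B \<in> Q" "B \<subseteq> x" by blast
    obtain c d e f where DB: "distinct [c,d,e,f]" and XB: "B = {c,d,e,f}" using card4[OF Q_card[OF B(1)]] by blast
    have fx: "finite x" using xP finP finite_subset by blast
    have "card (x - B) = 2" using card_Diff_subset[OF finite_subset[OF B(2) fx] B(2)] cx Q_card[OF B(1)] by simp
    then obtain p q where pq: "p \<noteq> q" "x - B = {p,q}" using card2 by blast
    have "x = (x - B) \<union> B" using B(2) by blast
    hence X: "x = {p,q,c,d,e,f}" using pq(2) XB by (simp add: insert_commute)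
    have "p \<in> x - B" "q \<in> x - B" using pq(2) by blast+
    hence "p \<notin> {c,d,e,f}" "q \<notin> {c,d,e,f}" using XB by blast+
    hence D: "distinct [p,q,c,d,e,f]" using pq(1) DB by simp
    have P: "p \<in> P" "q \<in> P" "c \<in> P" "d \<in> P" "e \<in> P" "f \<in> P" using xP X by auto
    have Y: "Z (L c \<oplus> L d \<oplus> L e \<oplus> L f)" using B(1) XB block_iff P DB by auto
    have sb: "L f = L c \<oplus> L d \<oplus> L e" using Y by (simp add: eqZ lxs)
    show ?thesis
    proof (cases "Z (L p \<oplus> L q \<oplus> L c \<oplus> L d)")
      case True
      have Y2: "Z (L p \<oplus> L q \<oplus> L e \<oplus> L f)" using True by (simp add: lxs sb)
      have D3: "distinct [p,q,c,d,e,f]" using D by simp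
      have X3: "x = {p,q,c,d,e,f}" using X by simp
      have Ys: "Z (L p \<oplus> L q \<oplus> L c \<oplus> L d)" "Z (L p \<oplus> L q \<oplus> L e \<oplus> L f)" "Z (L c \<oplus> L d \<oplus> L e \<oplus> L f)"
        using True Y2 Y by simp_all
      note V = V3[OF P D3 Ys X3]
      have "\<forall>k. Nb x k = F3 k" "cnt x = 3" using V unfolding Nb_def F3_def by auto
      thus ?thesis by blast
    next
      case n1: False
      show ?thesis
      proof (cases "Z (L p \<oplus> L q \<oplus> L c \<oplus> L e)")
        case True
        have Y2: "Z (L p \<oplus> L q \<oplus> L d \<oplus> L f)" using True by (simp add: lxs sb)
        have P3: "p \<in> P" "q \<in> P" "c \<in> P" "e \<in> P" "d \<in> P" "f \<in> P" using P by simp_all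
        have D3: "distinct [p,q,c,e,d,f]" using D by auto
        have X3: "x = {p,q,c,e,d,f}" using X by (simp add: insert_commute)
        have Ys: "Z (L p \<oplus> L q \<oplus> L c \<oplus> L e)" "Z (L p \<oplus> L q \<oplus> L d \<oplus> L f)" "Z (L c \<oplus> L e \<oplus> L d \<oplus> L f)"
          using True Y2 Y by (simp_all add: lxs)
        note V = V3[OF P3 D3 Ys X3]
        have "\<forall>k. Nb x k = F3 k" "cnt x = 3" using V unfolding Nb_def F3_def by auto
        thus ?thesis by blast
      next
        case n2: False
        show ?thesis
        proof (cases "Z (L p \<oplus> L q \<oplus> L c \<oplus> L f)")
          case True
          have Y2: "Z (L p \<oplus> L q \<oplus> L d \<oplus> L e)" using True by (simp add: lxs sb)
          have P3: "p \<in> P" "q \<in> P" "c \<in> P" "f \<in> P" "d \<in> P" "e \<in> P" using P by simp_all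
          have D3: "distinct [p,q,c,f,d,e]" using D by auto
          have X3: "x = {p,q,c,f,d,e}" using X by (simp add: insert_commute)
          have Ys: "Z (L p \<oplus> L q \<oplus> L c \<oplus> L f)" "Z (L p \<oplus> L q \<oplus> L d \<oplus> L e)" "Z (L c \<oplus> L f \<oplus> L d \<oplus> L e)"
            using True Y2 Y by (simp_all add: lxs)
          note V = V3[OF P3 D3 Ys X3]
          have "\<forall>k. Nb x k = F3 k" "cnt x = 3" using V unfolding Nb_def F3_def by auto
          thus ?thesis by blast
        next
          case n3: False
          have N: "\<not> Z (L p \<oplus> L q \<oplus> L d \<oplus> L e)" "\<not> Z (L p \<oplus> L q \<oplus> L d \<oplus> L f)" "\<not> Z (L p \<oplus> L q \<oplus> L e \<oplus> L f)"
            using n1 n2 n3 by (simp_all add: lxs sb)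
          have "\<forall>k. Nb x k = F1 k" "cnt x = 1" using V1[OF P D Y n1 n2 n3 N X] unfolding Nb_def F1_def
            by auto
          thus ?thesis by blast
        qed
      qed
    qed
  qed
qed



abbreviation VV where "VV \<equiv> johnson_vertices (2^m) 6"
abbreviation EE where "EE \<equiv> johnson_adj (2^m) 6"
abbreviation CC where "CC \<equiv> {x \<in> VV. \<forall>B\<in>Q. \<not> B \<subseteq> x}"

lemma finVV: "finite VV"
proof -
  have "VV \<subseteq> Pow {1..2^m}" by (auto simp: johnson_vertices_def)
  thus ?thesis by (rule finite_subset) simp
qed

lemma EE_V: "EE x y \<Longrightarrow> x \<in> VV \<and> y \<in> VV" by (simp add: johnson_adj_def)

lemma EE_sym: "EE x y \<Longrightarrow> EE y x" by (auto simp: johnson_adj_def Int_commute)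

lemma cnt0_iff: "x \<in> VV \<Longrightarrow> cnt x = 0 \<longleftrightarrow> (\<forall>B\<in>Q. \<not> B \<subseteq> x)"
proof -
  assume "x \<in> VV"
  hence fx: "finite x" by (auto simp: johnson_vertices_def intro: finite_subset)
  have "finite {B\<in>Q. B \<subseteq> x}" by (rule finite_subset[of _ "Pow x"]) (use fx in auto)
  thus ?thesis unfolding cnt_def by auto
qed

lemma Nb_pos: "0 < Nb x k \<Longrightarrow> \<exists>y. EE x y \<and> cnt y = k"
proof (rule ccontr)
  assume "0 < Nb x k" "\<not> (\<exists>y. EE x y \<and> cnt y = k)"
  hence "{y. EE x y \<and> cnt y = k} = {}" by blast
  hence "Nb x k = 0" unfolding Nb_def by (simp only: card.empty)
  thus False using \<open>0 < Nb x k\<close> by simp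
qed

lemma Nb_zero: "Nb x k = 0 \<Longrightarrow> \<not> (EE x y \<and> cnt y = k)"
proof
  assume N: "Nb x k = 0" and y: "EE x y \<and> cnt y = k"
  have "finite {y. EE x y \<and> cnt y = k}" by (rule finite_subset[OF _ finVV]) (auto dest: EE_V)
  moreover have "y \<in> {y. EE x y \<and> cnt y = k}" using y by simp
  ultimately have "Nb x k > 0" unfolding Nb_def by (metis card_gt_0_iff empty_iff)
  thus False using N by simp
qed

lemma m16: "(16::nat) \<le> 2^m"
proof -
  have "(2::nat)^4 \<le> 2^m" using m4 by (rule power_increasing) simp
  thus ?thesis by simp
qed

lemma walk0: "walk E c x 0 \<longleftrightarrow> c = x" unfolding walk_def by auto
lemma walk1: "walk E c x 1 \<longleftrightarrow> E c x"
proof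
  assume "walk E c x 1" then obtain p where "p 0 = c" "p 1 = x" "\<forall>i<1. E (p i) (p (Suc i))"
    unfolding walk_def by blast
  thus "E c x" by auto
next
  assume "E c x" thus "walk E c x 1" unfolding walk_def by (rule_tac x="\<lambda>i. if i = 0 then c else x" in exI) auto
qed
lemma walk1': "walk E c x (Suc 0) \<longleftrightarrow> E c x" using walk1 by simp
lemma walk2: "E c y \<Longrightarrow> E y x \<Longrightarrow> walk E c x 2"
  unfolding walk_def
  by (rule_tac x="\<lambda>i. if i = 0 then c else if i = 1 then y else x" in exI) (auto simp: less_2_cases_iff)

lemma dist_formula:
  assumes xV: "x \<in> VV"
  shows "dist_to EE CC x = (if cnt x = 0 then 0 else if cnt x = 1 then 1 else 2)"
proof -
  have cls: "(cnt x = 0 \<and> (\<forall>k. Nb x k = F0 k)) \<or> (cnt x = 1 \<and> (\<forall>k. Nb x k = F1 k)) \<or> (cnt x = 3 \<and> (\<forall>k. Nb x k = F3 k))"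
    by (rule classify[OF xV])
  have C0: "c \<in> CC \<longleftrightarrow> c \<in> VV \<and> cnt c = 0" for c using cnt0_iff[of c] by blast
  show ?thesis
  proof (cases "cnt x = 0")
    case True
    hence xC: "x \<in> CC" using C0[of x] xV by simp
    have "walk EE x x 0" by (simp add: walk0)
    hence "\<exists>c\<in>CC. walk EE c x 0" using xC by (rule bexI)
    hence "dist_to EE CC x = 0" unfolding dist_to_def by (rule Least_eq_0)
    thus ?thesis using True by simp
  next
    case F0: False
    have no0: "\<not> (\<exists>c\<in>CC. walk EE c x 0)"
    proof
      assume "\<exists>c\<in>CC. walk EE c x 0"
      then obtain c where c: "c \<in> CC" "walk EE c x 0" by blast
      hence "c = x" by (simp add: walk0)
      hence "cnt x = 0" using C0[of c] c(1) by simp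
      thus False using F0 by simp
    qed
    show ?thesis
    proof (cases "cnt x = 1")
      case True
      hence "\<forall>k. Nb x k = F1 k" using cls by simp
      hence "Nb x 0 = F1 0" by blast
      hence "0 < Nb x 0" using m16 by (simp add: F1_def)
      then obtain y where y: "EE x y" "cnt y = 0" using Nb_pos by blast
      have yV: "y \<in> VV" using y(1) EE_V by blast
      have yC: "y \<in> CC" using C0[of y] yV y(2) by simp
      have wy: "walk EE y x 1" using EE_sym[OF y(1)] by (simp add: walk1')
      have w1: "\<exists>c\<in>CC. walk EE c x 1" using wy yC by (rule bexI)
      have "dist_to EE CC x = 1" unfolding dist_to_def
      proof (rule Least_equality)
        show "\<exists>c\<in>CC. walk EE c x 1" by (rule w1)
      next
        fix k assume k: "\<exists>c\<in>CC. walk EE c x k"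
        show "1 \<le> k"
        proof (rule ccontr)
          assume "\<not> 1 \<le> k" hence "k = 0" by simp
          thus False using k no0 by simp
        qed
      qed
      thus ?thesis using True F0 by simp
    next
      case F1: False
      hence c3: "cnt x = 3" "\<forall>k. Nb x k = F3 k" using cls F0 by simp_all
      hence "Nb x 1 = F3 1" by blast
      hence "0 < Nb x 1" using m16 by (simp add: F3_def)
      then obtain y where y: "EE x y" "cnt y = 1" using Nb_pos by blast
      have yV: "y \<in> VV" using y EE_V by blast
      have "\<forall>k. Nb y k = F1 k" using classify[OF yV] y(2) by simp
      hence "Nb y 0 = F1 0" by blast
      hence "0 < Nb y 0" using m16 by (simp add: F1_def)
      then obtain c where c: "EE y c" "cnt c = 0" using Nb_pos by blast
      have cV: "c \<in> VV" using c EE_V by blast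
      have cC: "c \<in> CC" using C0[of c] cV c(2) by simp
      have "walk EE c x 2" by (rule walk2[of EE c y x, OF EE_sym[OF c(1)] EE_sym[OF y(1)]])
      hence w2: "\<exists>c\<in>CC. walk EE c x 2" using cC by (rule bexI)
      have no1: "\<not> (\<exists>c\<in>CC. walk EE c x 1)"
      proof
        assume "\<exists>c\<in>CC. walk EE c x 1"
        then obtain c where c0: "c \<in> CC" "walk EE c x 1" by blast
        hence c: "c \<in> CC" "EE c x" by (simp_all add: walk1')
        have cV: "c \<in> VV" "cnt c = 0" using c(1) C0[of c] by simp_all
        have "\<forall>k. Nb c k = F0 k" using classify[OF cV(1)] cV(2) by simp
        hence "Nb c 3 = F0 3" by blast
        hence "Nb c 3 = 0" by (simp add: F0_def)
        thus False using Nb_zero c(2) c3(1) by blast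
      qed
      have "dist_to EE CC x = 2" unfolding dist_to_def
      proof (rule Least_equality)
        show "\<exists>c\<in>CC. walk EE c x 2" by (rule w2)
      next
        fix k assume k: "\<exists>c\<in>CC. walk EE c x k"
        show "2 \<le> k"
        proof (rule ccontr)
          assume "\<not> 2 \<le> k" hence "k = 0 \<or> k = 1" by auto
          thus False using k no0 no1 by auto
        qed
      qed
      thus ?thesis using F0 F1 by simp
    qed
  qed
qed

lemma cnt_cases: "x \<in> VV \<Longrightarrow> cnt x = 0 \<or> cnt x = 1 \<or> cnt x = 3"
  using classify by blast

lemma layer_formula:
  "layer VV EE CC i = (if i = 0 then {x\<in>VV. cnt x = 0} else if i = 1 then {x\<in>VV. cnt x = 1}
     else if i = 2 then {x\<in>VV. cnt x = 3} else {})"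
proof -
  have "\<And>x. x \<in> VV \<Longrightarrow> int (dist_to EE CC x) = i \<longleftrightarrow> (if i = 0 then cnt x = 0 else if i = 1 then cnt x = 1
     else if i = 2 then cnt x = 3 else False)"
  proof -
    fix x assume xV: "x \<in> VV"
    show "?thesis x" using dist_formula[OF xV] cnt_cases[OF xV] by auto
  qed
  thus ?thesis unfolding layer_def by auto
qed


lemma nbl: "card {y\<in>VV. EE x y \<and> y \<in> layer VV EE CC j} =
   (if j = 0 then Nb x 0 else if j = 1 then Nb x 1 else if j = 2 then Nb x 3 else 0)"
proof -
  have e: "{y\<in>VV. EE x y \<and> y \<in> {z\<in>VV. cnt z = k}} = {y. EE x y \<and> cnt y = k}" for k
    using EE_V by blast
  show ?thesis unfolding layer_formula Nb_def using e by simp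
qed

lemma exists3: "\<exists>x. x \<in> VV \<and> cnt x = 3"
proof -
  have g: "(1::nat) < 2^m" "(2::nat) < 2^m" "(3::nat) < 2^m" "(4::nat) < 2^m" "(5::nat) < 2^m"
    using m16 by linarith+
  have Ls: "L (2^m) = Lb 0" "L 1 = Lb 1" "L 2 = Lb 2" "L 3 = Lb 3" "L 4 = Lb 4" "L 5 = Lb 5"
    using g m4 by (simp_all add: L_def)
  have P: "2^m \<in> P" "1 \<in> P" "2 \<in> P" "3 \<in> P" "4 \<in> P" "5 \<in> P" using g m16 m4 by (auto simp: P_def)
  have D: "distinct [2^m,1,2,3,4,5::nat]" using g m4 by auto
  have Y: "Z (L (2^m) \<oplus> L 1 \<oplus> L 2 \<oplus> L 3)" "Z (L (2^m) \<oplus> L 1 \<oplus> L 4 \<oplus> L 5)" "Z (L 2 \<oplus> L 3 \<oplus> L 4 \<oplus> L 5)"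
    unfolding Ls by (simp_all add: Z_def)
  have "cnt {2^m,1,2,3,4,5} = 3" by (rule V3(2)[OF P D Y refl])
  moreover have "{2^m,1,2,3,4,5} \<in> VV" using P D by (simp add: johnson_vertices_def P_def)
  ultimately show ?thesis by blast
qed

lemma nonempty: "\<exists>x. x \<in> VV \<and> cnt x = 0" "\<exists>x. x \<in> VV \<and> cnt x = 1" "\<exists>x. x \<in> VV \<and> cnt x = 3"
proof -
  obtain x3 where x3: "x3 \<in> VV" "cnt x3 = 3" using exists3 by blast
  have "\<forall>k. Nb x3 k = F3 k" using classify[OF x3(1)] x3(2) by simp
  hence "Nb x3 1 = F3 1" by blast
  hence "0 < Nb x3 1" using m16 by (simp add: F3_def)
  then obtain y where y: "EE x3 y" "cnt y = 1" using Nb_pos by blast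
  have yV: "y \<in> VV" using y EE_V by blast
  have "\<forall>k. Nb y k = F1 k" using classify[OF yV] y(2) by simp
  hence "Nb y 0 = F1 0" by blast
  hence "0 < Nb y 0" using m16 by (simp add: F1_def)
  then obtain c where c: "EE y c" "cnt c = 0" using Nb_pos by blast
  have cV: "c \<in> VV" using c EE_V by blast
  show "\<exists>x. x \<in> VV \<and> cnt x = 0" using cV c by blast
  show "\<exists>x. x \<in> VV \<and> cnt x = 1" using yV y by blast
  show "\<exists>x. x \<in> VV \<and> cnt x = 3" using x3 by blast
qed

lemma main:
  "completely_regular VV EE CC \<and> covering_radius VV EE CC = 2 \<and>
    layer VV EE CC 0 = {x \<in> VV. cnt x = 0} \<and>
    layer VV EE CC 1 = {x \<in> VV. cnt x = 1} \<and>
    layer VV EE CC 2 = {x \<in> VV. cnt x = 3} \<and>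
    (\<forall>x \<in> layer VV EE CC 0. \<forall>y \<in> layer VV EE CC 2. \<not> EE x y) \<and>
    (\<forall>x \<in> layer VV EE CC 1. card {y \<in> layer VV EE CC 2. EE x y} = 6)"
proof -
  have l0: "layer VV EE CC 0 = {x \<in> VV. cnt x = 0}" by (simp add: layer_formula)
  have l1: "layer VV EE CC 1 = {x \<in> VV. cnt x = 1}" by (simp add: layer_formula)
  have l2: "layer VV EE CC 2 = {x \<in> VV. cnt x = 3}" by (simp add: layer_formula)
  have NbF: "x \<in> VV \<Longrightarrow> Nb x k = (if cnt x = 0 then F0 k else if cnt x = 1 then F1 k else F3 k)" for x k
    using classify[of x] by auto
  have CCe: "CC = {x \<in> VV. cnt x = 0}" using cnt0_iff by blast
  have CR: "completely_regular VV EE CC"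
    unfolding completely_regular_def
  proof (intro conjI)
    show "CC \<noteq> {}" using nonempty(1) CCe by blast
    show "CC \<subseteq> VV" by blast
    let ?g = "\<lambda>i::int. if i = 1 then F1 0 else if i = 2 then F3 1 else 0"
    let ?a = "\<lambda>i::int. if i = 0 then F0 0 else if i = 1 then F1 1 else if i = 2 then F3 3 else 0"
    let ?b = "\<lambda>i::int. if i = 0 then F0 1 else if i = 1 then F1 3 else 0"
    show "\<exists>\<gamma> \<alpha> \<beta>. \<forall>i. \<forall>x\<in>layer VV EE CC i.
        card {y \<in> VV. EE x y \<and> y \<in> layer VV EE CC (i - 1)} = \<gamma> i \<and>
        card {y \<in> VV. EE x y \<and> y \<in> layer VV EE CC i} = \<alpha> i \<and>
        card {y \<in> VV. EE x y \<and> y \<in> layer VV EE CC (i + 1)} = \<beta> i"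
    proof (intro exI allI ballI)
      fix i x assume x: "x \<in> layer VV EE CC i"
      have xV: "x \<in> VV" using x unfolding layer_def by simp
      have ci: "(i = 0 \<and> cnt x = 0) \<or> (i = 1 \<and> cnt x = 1) \<or> (i = 2 \<and> cnt x = 3)"
        using x unfolding layer_formula by (auto split: if_splits)
      show "card {y \<in> VV. EE x y \<and> y \<in> layer VV EE CC (i - 1)} = ?g i \<and>
        card {y \<in> VV. EE x y \<and> y \<in> layer VV EE CC i} = ?a i \<and>
        card {y \<in> VV. EE x y \<and> y \<in> layer VV EE CC (i + 1)} = ?b i"
        unfolding nbl using ci NbF[OF xV] by auto
    qed
  qed
  have lne: "layer VV EE CC (int i) \<noteq> {} \<longleftrightarrow> i \<le> 2" for i
  proof -
    have "i = 0 \<or> i = 1 \<or> i = 2 \<or> 2 < i" by auto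
    thus ?thesis using nonempty unfolding layer_formula by auto
  qed
  have "{i. layer VV EE CC (int i) \<noteq> {}} = {0,1,2}" using lne by auto
  hence cov: "covering_radius VV EE CC = 2" unfolding covering_radius_def by simp
  have e02: "\<forall>x \<in> layer VV EE CC 0. \<forall>y \<in> layer VV EE CC 2. \<not> EE x y"
  proof (intro ballI)
    fix x y assume x: "x \<in> layer VV EE CC 0" and y: "y \<in> layer VV EE CC 2"
    have "x \<in> VV" "cnt x = 0" using x l0 by auto
    hence "Nb x 3 = 0" using NbF by (simp add: F0_def)
    moreover have "cnt y = 3" using y l2 by auto
    ultimately show "\<not> EE x y" using Nb_zero by blast
  qed
  have e12: "\<forall>x \<in> layer VV EE CC 1. card {y \<in> layer VV EE CC 2. EE x y} = 6"
  proof
    fix x assume x: "x \<in> layer VV EE CC 1"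
    have "x \<in> VV" "cnt x = 1" using x l1 by auto
    hence "Nb x 3 = 6" using NbF by (simp add: F1_def)
    moreover have "{y \<in> layer VV EE CC 2. EE x y} = {y. EE x y \<and> cnt y = 3}" unfolding l2 using EE_V by blast
    ultimately show "card {y \<in> layer VV EE CC 2. EE x y} = 6" unfolding Nb_def by simp
  qed
  show ?thesis using CR cov l0 l1 l2 e02 e12 by blast
qed

end

theorem theorem5p1:
  fixes m n :: nat and Q C :: "nat set set" and V :: "nat set set"
    and E :: "nat set \<Rightarrow> nat set \<Rightarrow> bool"
  assumes "m \<ge> 4" and "n = 2 ^ m"
    and "Q = hamming_SQS m"
    and "V = johnson_vertices n 6" and "E = johnson_adj n 6"
    and "C = {x \<in> V. \<forall>B \<in> Q. \<not> B \<subseteq> x}"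
  shows "completely_regular V E C \<and> covering_radius V E C = 2 \<and>
    layer V E C 0 = {x \<in> V. card {B \<in> Q. B \<subseteq> x} = 0} \<and>
    layer V E C 1 = {x \<in> V. card {B \<in> Q. B \<subseteq> x} = 1} \<and>
    layer V E C 2 = {x \<in> V. card {B \<in> Q. B \<subseteq> x} = 3} \<and>
    (\<forall>x \<in> layer V E C 0. \<forall>y \<in> layer V E C 2. \<not> E x y) \<and>
    (\<forall>x \<in> layer V E C 1. card {y \<in> layer V E C 2. E x y} = 6)"
proof -
  interpret H m by standard (rule assms(1))
  note M = main[unfolded cnt_def Q_def]
  show ?thesis unfolding assms(2-6) by (rule M)
qed

end
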